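(* Let $d \geq 1$. There is a constant $c_d > 0$ depending only on $d$ such that the following holds. Let $t > 0$ and let $(x_n)_{n=1}^{\infty}$ be a sequence in $\mathbb{T}^d$ satisfying $$ \lim_{N \rightarrow \infty}{ \frac{1}{N} \# \left\{ 1 \leq m \neq n \leq N: \|x_m - x_n\|_2 \leq \frac{s}{N^{1/d}} \right\}} = \omega_d s^d$$ for all $0 < s < t$. Then $$\limsup_{N \rightarrow \infty} \sum_{\ell \in \mathbb{Z}^d,\ 1 \leq \| \ell \|_2 \leq t^{-1} N^{1/d}}^{}{ \frac{1}{N^2} \left| \sum_{k=1}^{N}{e^{2 \pi i \langle \ell, x_k\rangle}} \right|^2} \leq \frac{c_d}{t^d}.$$
   Context: $\mathbb{T}^d = \mathbb{R}^d/\mathbb{Z}^d$ is the $d$-dimensional torus, normalized to have volume 1. $\|x_m - x_n\|_2$ denotes the Euclidean distance on the torus, i.e. the minimum of $\|y\|_2$ over all representatives $y \in \mathbb{R}^d$ of $x_m - x_n$. $\omega_d$ denotes the volume of the Euclidean unit ball in $\mathbb{R}^d$. $\langle \cdot,\cdot\rangle$ is the standard inner product. *)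

theory Defs
  imports "HOL-Analysis.Analysis"
begin

text \<open>Points of the torus R^d/Z^d are represented by arbitrary representatives in real^'d.\<close>

definition int_lattice :: "(real^'d) set" where
  "int_lattice = {v. \<forall>i. v $ i \<in> \<int>}"

definition torus_dist :: "real^'d \<Rightarrow> real^'d \<Rightarrow> real" where
  "torus_dist x y = Inf {norm (x - y - k) | k. k \<in> int_lattice}"

definition unit_ball_vol :: "'d::finite itself \<Rightarrow> real" where
  "unit_ball_vol _ = measure lborel (ball (0::real^'d) 1)"

definition close_pairs :: "(nat \<Rightarrow> real^'d::finite) \<Rightarrow> real \<Rightarrow> nat \<Rightarrow> nat" where
  "close_pairs x s N = card {(m, n). m \<in> {1..N} \<and> n \<in> {1..N} \<and> m \<noteq> n \<and>
      torus_dist (x m) (x n) \<le> s / (real N powr (1 / real CARD('d)))}"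

definition exp_sum_energy :: "(nat \<Rightarrow> real^'d::finite) \<Rightarrow> real \<Rightarrow> nat \<Rightarrow> real" where
  "exp_sum_energy x t N =
     (\<Sum>l\<in>{l \<in> int_lattice. 1 \<le> norm l \<and> norm l \<le> real N powr (1 / real CARD('d)) / t}.
        (norm (\<Sum>k=1..N. exp (complex_of_real (2 * pi * (l \<bullet> x k)) * \<i>)))\<^sup>2 / (real N)\<^sup>2)"

end

theory Submission
  imports Defs
begin

lemma measure_linear_image_fin:
  fixes f :: "real^'n \<Rightarrow> real^'n"
  assumes "linear f" "S \<in> lmeasurable"
  shows "f ` S \<in> lmeasurable \<and> measure lebesgue (f ` S) = \<bar>det (matrix f)\<bar> * measure lebesgue S"
proof -
  let ?Q = "\<lambda>f S. measure lebesgue (f ` S) = \<bar>det (matrix f)\<bar> * measure lebesgue S"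
  have "\<forall>S \<in> lmeasurable. (f ` S) \<in> lmeasurable \<and> ?Q f S"
  proof (rule induct_linear_elementary [OF \<open>linear f\<close>]; intro ballI)
    fix f g :: "real^'n \<Rightarrow> real^'n" and S :: "(real,'n) vec set"
    assume "linear f" and "linear g"
      and f [rule_format]: "\<forall>S \<in> lmeasurable. f ` S \<in> lmeasurable \<and> ?Q f S"
      and g [rule_format]: "\<forall>S \<in> lmeasurable. g ` S \<in> lmeasurable \<and> ?Q g S"
      and S: "S \<in> lmeasurable"
    then have gS: "g ` S \<in> lmeasurable"
      by blast
    show "(f \<circ> g) ` S \<in> lmeasurable \<and> ?Q (f \<circ> g) S"
      using f [OF gS] g [OF S] matrix_compose [OF \<open>linear g\<close> \<open>linear f\<close>]
      by (simp add: o_def image_comp abs_mult det_mul)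
  next
    fix f :: "real^'n \<Rightarrow> real^'n" and i and S :: "(real^'n) set"
    assume "linear f" and 0: "\<And>x. f x $ i = 0" and "S \<in> lmeasurable"
    then have "\<not> inj f"
      by (metis (full_types) linear_injective_imp_surjective one_neq_zero surjE vec_component)
    have detf: "det (matrix f) = 0"
      using \<open>\<not> inj f\<close> det_nz_iff_inj[OF \<open>linear f\<close>] by blast
    show "f ` S \<in> lmeasurable \<and> ?Q f S"
    proof
      show "f ` S \<in> lmeasurable"
        using lmeasurable_iff_indicator_has_integral \<open>linear f\<close> \<open>\<not> inj f\<close> negligible_UNIV negligible_linear_singular_image by blast
      have "measure lebesgue (f ` S) = 0"
        by (meson \<open>\<not> inj f\<close> \<open>linear f\<close> negligible_imp_measure0 negligible_linear_singular_image)
      then show "?Q f S"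
        by (simp add: detf)
    qed
  next
    fix c and S :: "(real^'n) set"
    assume "S \<in> lmeasurable"
    show "(\<lambda>a. \<chi> i. c i * a $ i) ` S \<in> lmeasurable \<and> ?Q (\<lambda>a. \<chi> i. c i * a $ i) S"
    proof
      show "(\<lambda>a. \<chi> i. c i * a $ i) ` S \<in> lmeasurable"
        by (simp add: \<open>S \<in> lmeasurable\<close> measurable_stretch)
      show "?Q (\<lambda>a. \<chi> i. c i * a $ i) S"
        by (simp add: measure_stretch [OF \<open>S \<in> lmeasurable\<close>, of c] axis_def matrix_def det_diagonal)
    qed
  next
    fix m :: "'n" and n :: "'n" and S :: "(real, 'n) vec set"
    assume "m \<noteq> n" and "S \<in> lmeasurable"
    let ?h = "\<lambda>v::(real, 'n) vec. \<chi> i. v $ Transposition.transpose m n i"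
    have lin: "linear ?h"
      by (rule linearI) (simp_all add: plus_vec_def scaleR_vec_def)
    have meq: "measure lebesgue (?h ` cbox a b) = measure lebesgue (cbox a b)" for a b
    proof (cases "cbox a b = {}")
      case True then show ?thesis
        by simp
    next
      case False
      then have him: "?h ` (cbox a b) \<noteq> {}"
        by blast
      have eq: "?h ` (cbox a b) = cbox (?h a) (?h b)"
        by (auto simp: image_iff lambda_swap_Galois mem_box_cart) (metis transpose_involutory)+
      show ?thesis
        using him prod.permute [OF permutes_swap_id, where S=UNIV and g="\<lambda>i. (b - a)$i", symmetric]
        by (simp add: eq content_cbox_cart False)
    qed
    have "(\<chi> i j. if Transposition.transpose m n i = j then 1 else 0) = (\<chi> i j. if j = Transposition.transpose m n i then 1 else (0::real))"
      by (auto intro!: Cart_lambda_cong)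
    then have "matrix ?h = transpose(\<chi> i j. mat 1 $ i $ Transposition.transpose m n j)"
      by (auto simp: matrix_eq transpose_def axis_def mat_def matrix_def)
    then have 1: "\<bar>det (matrix ?h)\<bar> = 1"
      by (simp add: det_permute_columns permutes_swap_id sign_swap_id abs_mult)
    show "?h ` S \<in> lmeasurable \<and> ?Q ?h S"
      using measure_linear_sufficient [OF lin \<open>S \<in> lmeasurable\<close>] meq 1 by force
  next
    fix m n :: "'n" and S :: "(real, 'n) vec set"
    assume "m \<noteq> n" and "S \<in> lmeasurable"
    let ?h = "\<lambda>v::(real, 'n) vec. \<chi> i. if i = m then v $ m + v $ n else v $ i"
    have lin: "linear ?h"
      by (rule linearI) (auto simp: algebra_simps plus_vec_def scaleR_vec_def vec_eq_iff)
    have "matrix ?h = (\<chi> k. if k = m then row m (mat 1) + 1 *s row n (mat 1) else row k (mat 1))"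
      using \<open>m \<noteq> n\<close>
      by (auto simp: matrix_def row_def mat_def axis_def vec_eq_iff)
    then have 1: "det(matrix ?h) = 1"
      using det_row_operation[OF \<open>m \<noteq> n\<close>, of "mat 1" 1] by simp
    have meq: "measure lebesgue (?h ` (cbox a b)) = measure lebesgue (cbox a b)" for a b
    proof (cases "cbox a b = {}")
      case True then show ?thesis by simp
    next
      case False
      then have ne: "(+) (\<chi> i. if i = n then - a $ n else 0) ` cbox a b \<noteq> {}"
        by auto
      let ?v = "\<chi> i. if i = n then - a $ n else 0"
      have "?h ` cbox a b
            = (+) (\<chi> i. if i = m \<or> i = n then a $ n else 0) ` ?h ` (+) ?v ` (cbox a b)"
        using \<open>m \<noteq> n\<close> unfolding image_comp o_def by (force simp: vec_eq_iff)
      then have "measure lebesgue (?h ` (cbox a b))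
               = measure lebesgue ((\<lambda>v. \<chi> i. if i = m then v $ m + v $ n else v $ i) `
                                   (+) ?v ` cbox a b)"
        by (rule ssubst) (rule measure_translation)
      also have "\<dots> = measure lebesgue ((\<lambda>v. \<chi> i. if i = m then v $ m + v $ n else v $ i) ` cbox (?v +a) (?v + b))"
        by (metis (no_types, lifting) cbox_translation)
      also have "\<dots> = measure lebesgue ((+) ?v ` cbox a b)"
        apply (subst measure_shear_interval)
        using \<open>m \<noteq> n\<close> ne apply auto
        apply (simp add: cbox_translation)
        by (metis cbox_borel cbox_translation measure_completion sets_lborel)
      also have "\<dots> = measure lebesgue (cbox a b)"
        by (rule measure_translation)
        finally show ?thesis .
      qed
    show "?h ` S \<in> lmeasurable \<and> ?Q ?h S"
      using measure_linear_sufficient [OF lin \<open>S \<in> lmeasurable\<close>] meq 1 by force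
  qed
  with assms show ?thesis
    by metis
qed

lemma measure_orthogonal_image_fin:
  fixes f :: "real^'n \<Rightarrow> real^'n"
  assumes f: "orthogonal_transformation f" and S: "S \<in> lmeasurable"
  shows "measure lebesgue (f ` S) = measure lebesgue S"
  using measure_linear_image_fin[OF orthogonal_transformation_linear[OF f] S] f by simp

definition lensH :: "real \<Rightarrow> real^'d \<Rightarrow> real" where
  "lensH \<rho> y = measure lborel (cball 0 \<rho> \<inter> cball y \<rho>)"

lemma cball_fmeas: "cball (a::real^'d) r \<in> fmeasurable lborel"
  using emeasure_lborel_cball_finite[of a r] by (intro fmeasurableI) auto

lemma lens_fmeas: "cball (a::real^'d) r \<inter> cball b r \<in> fmeasurable lborel"
  by (rule fmeasurable_Int_fmeasurable[OF cball_fmeas]) auto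

lemma lens_lebesgue: "measure lebesgue (cball (a::real^'d) r \<inter> cball b r) = measure lborel (cball a r \<inter> cball b r)"
  by (intro measure_completion) auto

lemma lensH_radial:
  fixes y y' :: "real^'d"
  assumes "norm y = norm y'"
  shows "lensH \<rho> y = lensH \<rho> y'"
proof -
  obtain f where f: "orthogonal_transformation f" "f y = y'"
    using orthogonal_transformation_exists[OF assms] by blast
  have f0: "f 0 = 0" using f(1) linear_0 orthogonal_transformation_linear by blast
  have "f ` (cball 0 \<rho> \<inter> cball y \<rho>) = f ` cball 0 \<rho> \<inter> f ` cball y \<rho>"
    using orthogonal_transformation_inj[OF f(1)] by (simp add: image_Int)
  also have "\<dots> = cball 0 \<rho> \<inter> cball y' \<rho>"
    using image_orthogonal_transformation_cball[OF f(1)] f f0 by simp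
  finally have eq: "f ` (cball 0 \<rho> \<inter> cball y \<rho>) = cball 0 \<rho> \<inter> cball y' \<rho>" .
  have "cball 0 \<rho> \<inter> cball y \<rho> \<in> lmeasurable"
    by (rule fmeasurable_Int_fmeasurable[OF lmeasurable_cball]) (auto intro: fmeasurableD[OF lmeasurable_cball])
  from measure_orthogonal_image_fin[OF f(1) this] eq
  show ?thesis unfolding lensH_def by (simp add: lens_lebesgue)
qed

lemma lensH_antimono:
  fixes y y' :: "real^'d"
  assumes "norm y \<le> norm y'"
  shows "lensH \<rho> y' \<le> lensH \<rho> y"
proof (cases "y' = 0")
  case True
  then show ?thesis using assms by simp
next
  case False
  define l where "l = norm y / norm y'"
  have l: "0 \<le> l" "l \<le> 1" using assms False by (auto simp: l_def)
  define y'' where "y'' = l *\<^sub>R y'"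
  have "norm y'' = norm y" using False by (simp add: y''_def l_def)
  then have eq: "lensH \<rho> y = lensH \<rho> y''" by (rule lensH_radial[symmetric])
  have sub: "cball 0 \<rho> \<inter> cball y' \<rho> \<subseteq> cball 0 \<rho> \<inter> cball y'' \<rho>"
  proof
    fix u assume u: "u \<in> cball 0 \<rho> \<inter> cball y' \<rho>"
    have "u - y'' = l *\<^sub>R (u - y') + (1 - l) *\<^sub>R u"
      by (simp add: y''_def algebra_simps)
    then have "norm (u - y'') \<le> l * norm (u - y') + (1 - l) * norm u"
      using l by (metis (no_types) abs_of_nonneg diff_ge_0_iff_ge norm_scaleR norm_triangle_ineq)
    also have "\<dots> \<le> l * \<rho> + (1 - l) * \<rho>"
      using u l by (intro add_mono mult_left_mono) (auto simp: dist_norm norm_minus_commute)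
    finally show "u \<in> cball 0 \<rho> \<inter> cball y'' \<rho>"
      using u by (auto simp: dist_norm norm_minus_commute algebra_simps)
  qed
  have "lensH \<rho> y' \<le> lensH \<rho> y''"
    unfolding lensH_def
    by (rule measure_mono_fmeasurable[OF sub]) (use lens_fmeas in auto)
  then show ?thesis using eq by simp
qed

lemma lensH_zero:
  fixes y :: "real^'d"
  assumes "norm y > 2 * \<rho>"
  shows "lensH \<rho> y = 0"
proof -
  have "cball 0 \<rho> \<inter> cball y \<rho> = {}"
  proof (safe)
    fix u assume "u \<in> cball 0 \<rho>" "u \<in> cball y \<rho>"
    then have "norm u \<le> \<rho>" "norm (y - u) \<le> \<rho>" by (auto simp: dist_norm)
    then have "norm y \<le> 2 * \<rho>" using norm_triangle_ineq[of u "y - u"] by simp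
    then show "u \<in> {}" using assms by simp
  qed
  then show ?thesis by (simp add: lensH_def)
qed

lemma lensH_nonneg: "0 \<le> lensH \<rho> y"
  by (simp add: lensH_def)

lemma lensH_le: "lensH \<rho> (y::real^'d) \<le> measure lborel (cball (0::real^'d) \<rho>)"
  unfolding lensH_def
  by (rule measure_mono_fmeasurable) (auto simp: cball_fmeas)

lemma lensH_0: "lensH \<rho> (0::real^'d) = measure lborel (cball (0::real^'d) \<rho>)"
  by (simp add: lensH_def)

lemma lensH_integral:
  "(\<integral>\<^sup>+ y. ennreal (lensH \<rho> (y::real^'d)) \<partial>lborel) = ennreal (measure lborel (cball (0::real^'d) \<rho>))^2"
proof -
  define A where "A = {p::(real^'d) \<times> (real^'d). norm (snd p) \<le> \<rho> \<and> dist (fst p) (snd p) \<le> \<rho>}"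
  have A: "A \<in> sets (lborel \<Otimes>\<^sub>M lborel)"
  proof -
    have "closed A" unfolding A_def
      by (intro closed_Collect_conj closed_Collect_le continuous_intros)
    then show ?thesis unfolding lborel_prod by auto
  qed
  have e1: "ennreal (lensH \<rho> y) = emeasure lborel (Pair y -` A)" for y
  proof -
    have "Pair y -` A = cball 0 \<rho> \<inter> cball y \<rho>" by (auto simp: A_def)
    then show ?thesis unfolding lensH_def
      using lens_fmeas[of 0 \<rho> y]
      by (simp add: emeasure_eq_measure2)
  qed
  have e2: "emeasure lborel ((\<lambda>x. (x, u)) -` A) = indicator (cball 0 \<rho>) u * emeasure lborel (cball (0::real^'d) \<rho>)" for u
  proof (cases "norm u \<le> \<rho>")
    case True
    have "(\<lambda>x. (x, u)) -` A = cball u \<rho>" using True by (auto simp: A_def dist_commute)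
    moreover have "emeasure lborel (cball u \<rho>) = emeasure lborel (cball (0::real^'d) \<rho>)"
      by (cases "\<rho> < 0") (auto simp: emeasure_cball)
    ultimately show ?thesis using True by simp
  next
    case False
    then have "(\<lambda>x. (x, u)) -` A = {}" by (auto simp: A_def)
    then show ?thesis using False by simp
  qed
  have "(\<integral>\<^sup>+ y. ennreal (lensH \<rho> (y::real^'d)) \<partial>lborel) = emeasure (lborel \<Otimes>\<^sub>M lborel) A"
    using lborel.emeasure_pair_measure_alt[OF A] by (simp add: e1[symmetric])
  also have "\<dots> = (\<integral>\<^sup>+ u. indicator (cball 0 \<rho>) (u::real^'d) * emeasure lborel (cball (0::real^'d) \<rho>) \<partial>lborel)"
    unfolding lborel_pair.emeasure_pair_measure_alt2[OF A] e2 ..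
  also have "\<dots> = emeasure lborel (cball (0::real^'d) \<rho>) * emeasure lborel (cball (0::real^'d) \<rho>)"
    by (subst nn_integral_multc) (auto simp: mult.commute intro!: borel_measurable_indicator)
  also have "\<dots> = ennreal (measure lborel (cball (0::real^'d) \<rho>))^2"
    using emeasure_lborel_cball_finite[of "0::real^'d" \<rho>]
    by (simp add: emeasure_eq_measure2[OF cball_fmeas] power2_eq_square ennreal_mult')
  finally show ?thesis .
qed

lemma step_bounds:
  fixes h :: "real \<Rightarrow> real" and T :: real and M :: nat
  assumes anti: "\<And>a b. 0 \<le> a \<Longrightarrow> a \<le> b \<Longrightarrow> h b \<le> h a"
    and T: "T > 0" and M: "M > 0" and r: "0 \<le> r" "r \<le> T"
  defines "t \<equiv> (\<lambda>j::nat. T * real j / real M)"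
  shows "(\<Sum>j<M. (h (t j) - h (t (Suc j))) * of_bool (r \<le> t j)) + h (t M) \<le> h r"
    and "h r \<le> (\<Sum>j<M. (h (t j) - h (t (Suc j))) * of_bool (r \<le> t (Suc j))) + h (t M)"
proof -
  have t0: "t 0 = 0" by (simp add: t_def)
  have tM: "t M = T" using M by (simp add: t_def)
  have tnn: "0 \<le> t j" for j using T by (simp add: t_def)
  have tmono: "t j \<le> t (Suc j)" for j using T M by (simp add: t_def field_simps)
  have tel: "(\<Sum>j<M. h (max r (t j)) - h (max r (t (Suc j)))) = h r - h (t M)"
    using sum_lessThan_telescope'[of "\<lambda>j. h (max r (t j))" M] r t0 tM by simp
  have lo: "(h (t j) - h (t (Suc j))) * of_bool (r \<le> t j) \<le> h (max r (t j)) - h (max r (t (Suc j)))" for j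
  proof (cases "r \<le> t j")
    case True then show ?thesis using tmono[of j] by (simp add: max_def)
  next
    case False
    show ?thesis
    proof (cases "r \<le> t (Suc j)")
      case True
      then show ?thesis using False anti[of r "t (Suc j)"] r by (simp add: max_def)
    next
      case False2: False
      then show ?thesis using False by (simp add: max_def)
    qed
  qed
  have hi: "h (max r (t j)) - h (max r (t (Suc j))) \<le> (h (t j) - h (t (Suc j))) * of_bool (r \<le> t (Suc j))" for j
  proof (cases "r \<le> t j")
    case True then show ?thesis using tmono[of j] by (simp add: max_def)
  next
    case False
    show ?thesis
    proof (cases "r \<le> t (Suc j)")
      case True
      then show ?thesis using False anti[of "t j" r] tnn[of j] by (simp add: max_def)
    next
      case False2: False
      then show ?thesis using False by (simp add: max_def)
    qed
  qed
  show "(\<Sum>j<M. (h (t j) - h (t (Suc j))) * of_bool (r \<le> t j)) + h (t M) \<le> h r"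
  proof -
    have "(\<Sum>j<M. (h (t j) - h (t (Suc j))) * of_bool (r \<le> t j)) \<le> (\<Sum>j<M. h (max r (t j)) - h (max r (t (Suc j))))"
      by (rule sum_mono) (rule lo)
    then show ?thesis using tel by linarith
  qed
  show "h r \<le> (\<Sum>j<M. (h (t j) - h (t (Suc j))) * of_bool (r \<le> t (Suc j))) + h (t M)"
  proof -
    have "(\<Sum>j<M. h (max r (t j)) - h (max r (t (Suc j)))) \<le> (\<Sum>j<M. (h (t j) - h (t (Suc j))) * of_bool (r \<le> t (Suc j)))"
      by (rule sum_mono) (rule hi)
    then show ?thesis using tel by linarith
  qed
qed

lemma lat_0: "0 \<in> int_lattice" by (simp add: int_lattice_def)
lemma lat_add: "a \<in> int_lattice \<Longrightarrow> b \<in> int_lattice \<Longrightarrow> a + b \<in> int_lattice"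
  by (auto simp: int_lattice_def)
lemma lat_diff: "a \<in> int_lattice \<Longrightarrow> b \<in> int_lattice \<Longrightarrow> a - b \<in> int_lattice"
  by (auto simp: int_lattice_def)
lemma lat_uminus: "a \<in> int_lattice \<Longrightarrow> - a \<in> int_lattice"
  by (auto simp: int_lattice_def)

lemma lat_norm_ge1:
  assumes "n \<in> int_lattice" "n \<noteq> 0"
  shows "1 \<le> norm n"
proof -
  obtain i where i: "n $ i \<noteq> 0" using assms(2) by (metis vec_eq_iff zero_index)
  obtain k where k: "n $ i = of_int k" using assms(1) by (auto simp: int_lattice_def elim: Ints_cases)
  have "k \<noteq> 0" using i k by auto
  then have "1 \<le> \<bar>n $ i\<bar>" using k by linarith
  also have "\<dots> \<le> norm n" by (rule component_le_norm_cart)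
  finally show ?thesis .
qed

lemma lat_eq:
  assumes "n \<in> int_lattice" "m \<in> int_lattice" "norm (n - m) < 1"
  shows "n = m"
  using lat_norm_ge1[OF lat_diff[OF assms(1,2)]] assms(3) by force

lemma lat_box_finite: "finite {n::real^'d. n \<in> int_lattice \<and> (\<forall>i. \<bar>n $ i\<bar> \<le> R)}"
proof -
  define K where "K = \<lceil>R\<rceil>"
  have "{n::real^'d. n \<in> int_lattice \<and> (\<forall>i. \<bar>n $ i\<bar> \<le> R)} \<subseteq>
        (\<lambda>f. \<chi> i. of_int (f i)) ` (UNIV \<rightarrow>\<^sub>E {-K..K})"
  proof
    fix n :: "real^'d" assume n: "n \<in> {n. n \<in> int_lattice \<and> (\<forall>i. \<bar>n $ i\<bar> \<le> R)}"
    define f where "f = (\<lambda>i. floor (n $ i))"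
    have ni: "n $ i = of_int (f i)" for i
      using n by (auto simp: int_lattice_def f_def elim!: Ints_cases)
    have "f \<in> UNIV \<rightarrow>\<^sub>E {-K..K}"
    proof -
      have "\<bar>f i\<bar> \<le> K" for i
      proof -
        have "\<bar>n $ i\<bar> \<le> R" using n by auto
        then have "\<bar>real_of_int (f i)\<bar> \<le> R" using ni[of i] by simp
        then have "real_of_int \<bar>f i\<bar> \<le> R" by simp
        then show ?thesis unfolding K_def by linarith
      qed
      then have "\<forall>i. f i \<in> {-K..K}" by (simp add: abs_le_iff) (metis minus_le_iff)
      then show ?thesis by (simp add: PiE_iff)
    qed
    moreover have "n = (\<chi> i. of_int (f i))" using ni by (simp add: vec_eq_iff)
    ultimately show "n \<in> (\<lambda>f. \<chi> i. of_int (f i)) ` (UNIV \<rightarrow>\<^sub>E {-K..K})" by blast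
  qed
  moreover have "finite ((\<lambda>f. (\<chi> i. of_int (f i)) :: real^'d) ` (UNIV \<rightarrow>\<^sub>E {-K..K}))"
    by (intro finite_imageI finite_PiE) auto
  ultimately show ?thesis by (rule finite_subset)
qed

lemma lat_inner_Ints:
  assumes "l \<in> int_lattice" "n \<in> int_lattice"
  shows "l \<bullet> n \<in> \<int>"
  using assms unfolding inner_vec_def int_lattice_def
  by (intro Ints_sum) (auto intro: Ints_mult)

definition rv :: "real^'d \<Rightarrow> real^'d" where
  "rv v = (\<chi> i. v $ i - of_int (round (v $ i)))"

lemma rv_lat: "v - rv v \<in> int_lattice"
  by (simp add: rv_def int_lattice_def)

lemma rv_min:
  assumes "q \<in> int_lattice"
  shows "norm (rv v) \<le> norm (v - q)"
proof (rule norm_le_componentwise_cart)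
  fix i
  obtain k where k: "q $ i = of_int k" using assms by (auto simp: int_lattice_def elim: Ints_cases)
  show "norm (rv v $ i) \<le> norm ((v - q) $ i)"
    using round_diff_minimal[of "v $ i" k] k by (simp add: rv_def)
qed

lemma round_add_int: "round (x + of_int k :: real) = round x + k"
proof -
  have "x + of_int k + 1/2 = (x + 1/2) + of_int k" by simp
  then show ?thesis unfolding round_def by (metis floor_add_int add.commute)
qed

lemma rv_periodic:
  assumes "q \<in> int_lattice"
  shows "rv (v + q) = rv v"
proof -
  have "(v + q) $ i - of_int (round ((v + q) $ i)) = v $ i - of_int (round (v $ i))" for i
  proof -
    obtain k where k: "q $ i = of_int k" using assms by (auto simp: int_lattice_def elim: Ints_cases)
    show ?thesis using round_add_int[of "v $ i" k] k by simp
  qed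
  then show ?thesis by (simp add: rv_def vec_eq_iff)
qed

lemma rv_measurable [measurable]: "rv \<in> borel_measurable borel"
proof -
  have "(\<lambda>v::real^'d. rv v $ i) \<in> borel_measurable borel" for i
  proof -
    have r: "(\<lambda>x::real. real_of_int (round x)) \<in> borel_measurable borel"
    proof -
      have "(\<lambda>x::real. real_of_int (round x)) = (\<lambda>x. real_of_int \<lfloor>x\<rfloor>) \<circ> (\<lambda>x. x + 1/2)"
        by (auto simp: round_def)
      moreover have a: "(\<lambda>x::real. x + 1/2) \<in> borel_measurable borel" by simp
      ultimately show ?thesis
        using measurable_comp[OF a borel_measurable_real_floor] by simp
    qed
    have c: "(\<lambda>v::real^'d. v $ i) \<in> borel_measurable borel"
      by (intro borel_measurable_continuous_onI continuous_intros)
    have "(\<lambda>v::real^'d. real_of_int (round (v $ i))) \<in> borel_measurable borel"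
      using measurable_comp[OF c r] by (simp add: o_def)
    then show ?thesis using c unfolding rv_def by simp
  qed
  then show ?thesis
    by (subst borel_measurable_euclidean_space) (auto simp: Basis_vec_def cart_eq_inner_axis[symmetric])
qed

lemma torus_dist_le:
  assumes "q \<in> int_lattice"
  shows "torus_dist a b \<le> norm (a - b - q)"
proof -
  have "norm (a - b - q) \<in> {norm (a - b - k) | k. k \<in> int_lattice}" using assms by blast
  moreover have "bdd_below {norm (a - b - k) | k. k \<in> int_lattice}"
    by (rule bdd_belowI[of _ 0]) auto
  ultimately show ?thesis unfolding torus_dist_def by (rule cInf_lower)
qed

definition fv :: "real^'d \<Rightarrow> real^'d" where
  "fv v = (\<chi> i. of_int (floor (v $ i)))"

definition cube :: "(real^'d) set" where
  "cube = {u. \<forall>i. 0 \<le> u $ i \<and> u $ i < 1}"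

lemma fv_lat: "fv v \<in> int_lattice"
  by (simp add: fv_def int_lattice_def)

lemma fv_cube: "v - fv v \<in> cube"
  by (simp add: fv_def cube_def) linarith

lemma fv_unique:
  assumes "n \<in> int_lattice" "v - n \<in> cube"
  shows "n = fv v"
proof -
  have "n $ i = of_int (floor (v $ i))" for i
  proof -
    obtain k where k: "n $ i = of_int k" using assms(1) by (auto simp: int_lattice_def elim: Ints_cases)
    have "0 \<le> (v - n) $ i \<and> (v - n) $ i < 1" using assms(2) unfolding cube_def by blast
    then have "0 \<le> v $ i - of_int k" "v $ i - of_int k < 1" using k by auto
    then have "floor (v $ i) = k" by linarith
    then show ?thesis using k by simp
  qed
  then show ?thesis by (simp add: fv_def vec_eq_iff)
qed

lemma cube_sets [measurable]: "cube \<in> sets (borel :: (real^'d) measure)"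
proof -
  have eq: "cube = (\<Inter>i\<in>UNIV. {u::real^'d. 0 \<le> u $ i} \<inter> {u. u $ i < 1})" by (auto simp: cube_def)
  have a: "{u::real^'d. 0 \<le> u $ i} \<in> sets borel" for i
    by (rule borel_closed) (intro closed_Collect_le continuous_intros)
  have b: "{u::real^'d. u $ i < 1} \<in> sets borel" for i
    by (rule borel_open) (intro open_Collect_less continuous_intros)
  show ?thesis unfolding eq
    by (rule sets.finite_INT) (use a b in auto)
qed

lemma cube_measure: "emeasure lborel (cube :: (real^'d) set) = 1"
proof (rule antisym)
  have "cube \<subseteq> cbox (0::real^'d) 1" by (auto simp: cube_def mem_box_cart less_imp_le)
  then have "emeasure lborel (cube :: (real^'d) set) \<le> emeasure lborel (cbox (0::real^'d) 1)"
    by (intro emeasure_mono) auto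
  also have "\<dots> = 1"
  proof -
    have "prod ((\<bullet>) (1::real^'d)) Basis = 1"
      by (rule prod.neutral) (auto simp: Basis_vec_def inner_axis)
    then show ?thesis by (simp add: emeasure_lborel_cbox_eq Basis_vec_def inner_axis)
  qed
  finally show "emeasure lborel (cube :: (real^'d) set) \<le> 1" .
  have "box (0::real^'d) 1 \<subseteq> cube" by (auto simp: cube_def mem_box_cart less_imp_le)
  then have "emeasure lborel (box (0::real^'d) 1) \<le> emeasure lborel (cube :: (real^'d) set)"
    by (intro emeasure_mono) auto
  moreover have "emeasure lborel (box (0::real^'d) 1) = 1"
  proof -
    have "prod ((\<bullet>) (1::real^'d)) Basis = 1"
      by (rule prod.neutral) (auto simp: Basis_vec_def inner_axis)
    then show ?thesis by (simp add: emeasure_lborel_box_eq Basis_vec_def inner_axis)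
  qed
  ultimately show "1 \<le> emeasure lborel (cube :: (real^'d) set)" by simp
qed

definition ee :: "real \<Rightarrow> complex" where "ee x = cis (2 * pi * x)"

lemma ee_add: "ee (a + b) = ee a * ee b"
  by (simp add: ee_def distrib_left cis_mult[symmetric] add.commute)

lemma ee_int: "x \<in> \<int> \<Longrightarrow> ee x = 1"
  by (simp add: ee_def cis_multiple_2pi)

lemma ee_half: "ee (1/2) = -1"
  by (simp add: ee_def cis.ctr complex_eq_iff)

lemma norm_ee [simp]: "cmod (ee x) = 1"
  by (simp add: ee_def)

lemma cnj_ee: "cnj (ee x) = ee (- x)"
  by (simp add: ee_def cis_cnj)

lemma ee_0 [simp]: "ee 0 = 1" by (simp add: ee_def)

lemma ee_cont [continuous_intros]: "continuous_on S ee"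
  unfolding ee_def by (intro continuous_intros)

lemma ee_meas [measurable]: "ee \<in> borel_measurable borel"
  by (intro borel_measurable_continuous_onI ee_cont)

definition bmc :: "(real^'d \<Rightarrow> complex) \<Rightarrow> bool" where
  "bmc F \<longleftrightarrow> F \<in> borel_measurable borel \<and> (\<exists>B. \<forall>u. cmod (F u) \<le> B)"

definition cint :: "(real^'d \<Rightarrow> complex) \<Rightarrow> complex" where
  "cint F = (\<integral>u. of_real (indicator cube u) * F u \<partial>lborel)"

lemma bmc_integrable:
  assumes "bmc F"
  shows "integrable lborel (\<lambda>u. of_real (indicator cube u) * F u)"
proof -
  obtain B where B: "\<And>u. cmod (F u) \<le> B" and m: "F \<in> borel_measurable borel"
    using assms by (auto simp: bmc_def)
  show ?thesis
  proof (rule integrableI_bounded_set[where A=cube and B=B])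
    show "cube \<in> sets lborel" by simp
    show "(\<lambda>u. of_real (indicator cube u) * F u) \<in> borel_measurable lborel" using m by simp
    show "emeasure lborel cube < \<infinity>" by (simp add: cube_measure)
    show "AE x in lborel. x \<in> cube \<longrightarrow> cmod (of_real (indicator cube x) * F x) \<le> B"
      using B by (auto simp: norm_mult)
    show "AE x in lborel. x \<notin> cube \<longrightarrow> of_real (indicator cube x) * F x = 0"
      by auto
  qed
qed

lemma bmc_add [intro]: "bmc F \<Longrightarrow> bmc G \<Longrightarrow> bmc (\<lambda>u. F u + G u)"
  unfolding bmc_def
  by (auto intro!: exI[of _ "_ + _"] order_trans[OF norm_triangle_ineq] add_mono)

lemma bmc_diff [intro]: "bmc F \<Longrightarrow> bmc G \<Longrightarrow> bmc (\<lambda>u. F u - G u)"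
  unfolding bmc_def
  by (auto intro!: exI[of _ "_ + _"] order_trans[OF norm_triangle_ineq4] add_mono)

lemma bmc_mult [intro]: "bmc F \<Longrightarrow> bmc G \<Longrightarrow> bmc (\<lambda>u. F u * G u)"
proof -
  assume "bmc F" "bmc G"
  then obtain B C where B: "\<And>u. cmod (F u) \<le> B" and C: "\<And>u. cmod (G u) \<le> C"
    and m: "F \<in> borel_measurable borel" "G \<in> borel_measurable borel" by (auto simp: bmc_def)
  have "cmod (F u * G u) \<le> B * C" for u
    unfolding norm_mult by (rule mult_mono) (use B C in \<open>auto intro: order_trans[OF norm_ge_zero]\<close>)
  then show "bmc (\<lambda>u. F u * G u)" using m by (auto simp: bmc_def)
qed

lemma bmc_const [intro]: "bmc (\<lambda>u. c)"
  by (auto simp: bmc_def)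

lemma cnj_meas [measurable]: "cnj \<in> borel_measurable borel"
  by (intro borel_measurable_continuous_onI continuous_intros)

lemma bmc_cnj [intro]: "bmc F \<Longrightarrow> bmc (\<lambda>u. cnj (F u))"
  by (auto simp: bmc_def)

lemma bmc_ee [intro]: "bmc (\<lambda>u. ee (l \<bullet> u))"
  by (auto simp: bmc_def)

lemma bmc_sum [intro]: "(\<And>i. i \<in> I \<Longrightarrow> bmc (F i)) \<Longrightarrow> bmc (\<lambda>u. \<Sum>i\<in>I. F i u)"
proof (induction I rule: infinite_finite_induct)
  case (insert x F) then show ?case by (simp add: bmc_add)
qed auto

lemma bmc_real [intro]:
  fixes f :: "real^'d \<Rightarrow> real"
  assumes "f \<in> borel_measurable borel" "\<And>u. \<bar>f u\<bar> \<le> B"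
  shows "bmc (\<lambda>u. of_real (f u))"
  using assms by (auto simp: bmc_def)

lemma cint_add: "bmc F \<Longrightarrow> bmc G \<Longrightarrow> cint (\<lambda>u. F u + G u) = cint F + cint G"
  unfolding cint_def by (simp add: distrib_left bmc_integrable)

lemma cint_diff: "bmc F \<Longrightarrow> bmc G \<Longrightarrow> cint (\<lambda>u. F u - G u) = cint F - cint G"
  unfolding cint_def by (simp add: right_diff_distrib bmc_integrable)

lemma cint_sum: "(\<And>i. i \<in> I \<Longrightarrow> bmc (F i)) \<Longrightarrow> cint (\<lambda>u. \<Sum>i\<in>I. F i u) = (\<Sum>i\<in>I. cint (F i))"
  unfolding cint_def sum_distrib_left by (rule Bochner_Integration.integral_sum) (auto intro: bmc_integrable)

lemma cint_cmult: "cint (\<lambda>u. c * F u) = c * cint F"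
  unfolding cint_def
  by (simp add: mult.left_commute[of _ c] integral_mult_right_zero)

lemma cint_cnj: "cint (\<lambda>u. cnj (F u)) = cnj (cint F)"
  unfolding cint_def
  by (simp add: Bochner_Integration.integral_cnj[symmetric])

lemma lborel_translate:
  fixes f :: "real^'d \<Rightarrow> 'b::{banach,second_countable_topology}"
  assumes "f \<in> borel_measurable borel"
  shows "(\<integral>v. f v \<partial>lborel) = (\<integral>u. f (u + n) \<partial>lborel)"
proof -
  have "(\<integral>u. f (u + n) \<partial>lborel) = (\<integral>v. f v \<partial>(distr lborel borel ((+) n)))"
    using assms by (simp add: integral_distr add.commute)
  then show ?thesis by (simp add: lborel_distr_plus)
qed

lemma cube_lat_unique:
  assumes "a \<in> cube" "a + q \<in> cube" "q \<in> int_lattice"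
  shows "q = 0"
proof -
  have "q $ i = 0" for i
  proof -
    obtain k where k: "q $ i = of_int k" using assms(3) by (auto simp: int_lattice_def elim: Ints_cases)
    have h1: "0 \<le> a $ i" "a $ i < 1" using assms(1) unfolding cube_def by blast+
    have "0 \<le> (a + q) $ i" "(a + q) $ i < 1" using assms(2) unfolding cube_def by blast+
    then have h2: "0 \<le> a $ i + of_int k" "a $ i + of_int k < 1" using k by simp_all
    from h1 h2 have "real_of_int k < 1" "-1 < real_of_int k" by linarith+
    then have "k < 1" "-1 < k" by linarith+
    then have "k = 0" by simp
    then show ?thesis using k by simp
  qed
  then show ?thesis by (simp add: vec_eq_iff)
qed

lemma sum_ind_cube_1:
  assumes "D \<subseteq> int_lattice" "m \<in> D" "w + m \<in> cube" "finite D"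
  shows "(\<Sum>n\<in>D. indicator cube (w + n) :: real) = 1"
proof -
  have "(\<Sum>n\<in>D. indicator cube (w + n) :: real) = (\<Sum>n\<in>D. if n = m then 1 else 0)"
  proof (rule sum.cong)
    fix n assume n: "n \<in> D"
    have "n = m" if "w + n \<in> cube"
    proof -
      have e: "(w + m) + (n - m) = w + n" by simp
      have "n - m \<in> int_lattice" using assms(1,2) n by (intro lat_diff) auto
      then have "n - m = 0" using cube_lat_unique[of "w + m" "n - m"] assms(3) that e by simp
      then show ?thesis by simp
    qed
    show "indicator cube (w + n) = (if n = m then 1 else 0)"
    proof (cases "w + n \<in> cube")
      case True
      then have "n = m" by (rule \<open>w + n \<in> cube \<Longrightarrow> n = m\<close>)
      then show ?thesis using True by simp
    next
      case False
      then have "n \<noteq> m" using assms(3) by blast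
      then show ?thesis using False by simp
    qed
  qed simp
  also have "\<dots> = 1" using sum.delta[OF assms(4), of m "\<lambda>_. 1::real"] assms(2) by simp
  finally show ?thesis .
qed

lemma tiling:
  fixes g :: "real^'d \<Rightarrow> real" and P :: "real^'d \<Rightarrow> complex"
  assumes gm: "g \<in> borel_measurable borel" and gb: "\<And>v. \<bar>g v\<bar> \<le> Bg"
    and gs: "\<And>v. g v \<noteq> 0 \<Longrightarrow> norm v \<le> R \<and> fv v \<in> D"
    and P: "bmc P" and per: "\<And>u n. n \<in> int_lattice \<Longrightarrow> P (u + n) = P u"
    and D: "finite D" "D \<subseteq> int_lattice"
  shows "(\<integral>v. of_real (g v) * P v \<partial>lborel) = cint (\<lambda>u. of_real (\<Sum>n\<in>D. g (u + n)) * P u)"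
proof -
  obtain BP where BP: "\<And>u. cmod (P u) \<le> BP" and Pm: "P \<in> borel_measurable borel"
    using P by (auto simp: bmc_def)
  have step1: "of_real (g v) * P v = (\<Sum>n\<in>D. of_real (indicator cube (v - n) * g v) * P v)" for v
  proof (cases "g v = 0")
    case True then show ?thesis by simp
  next
    case False
    then have fD: "fv v \<in> D" using gs by blast
    have "(\<Sum>n\<in>D. indicator cube (v + (- n)) :: real) = (\<Sum>n\<in>uminus ` D. indicator cube (v + n))"
      by (subst sum.reindex) (auto simp: inj_on_def)
    also have "\<dots> = 1"
      by (rule sum_ind_cube_1) (use D fD fv_cube[of v] lat_uminus in auto)
    finally have "(\<Sum>n\<in>D. indicator cube (v - n) :: real) = 1" by simp
    moreover have "(\<Sum>n\<in>D. of_real (indicator cube (v - n) * g v) * P v) = of_real (\<Sum>n\<in>D. indicator cube (v - n) :: real) * (of_real (g v) * P v)"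
      by (simp add: sum_distrib_right mult.assoc)
    ultimately show ?thesis by simp
  qed
  have integ: "integrable lborel (\<lambda>v. of_real (indicator cube (v - n) * g v) * P v)" for n
  proof (rule integrableI_bounded_set[where A="cball 0 R" and B="Bg * BP"])
    show "(\<lambda>v. complex_of_real (indicator cube (v - n) * g v) * P v) \<in> borel_measurable lborel"
      using gm Pm by simp
    show "emeasure lborel (cball (0::real^'d) R) < \<infinity>" by (rule emeasure_lborel_cball_finite)
    have "cmod (of_real (indicator cube (v - n) * g v) * P v) \<le> Bg * BP" for v
    proof -
      have "cmod (of_real (indicator cube (v - n) * g v) * P v) = \<bar>indicator cube (v - n) * g v\<bar> * cmod (P v)"
        by (simp add: norm_mult abs_mult)
      also have "\<dots> \<le> Bg * BP"
        by (rule mult_mono) (use gb[of v] BP[of v] in \<open>auto simp: indicator_def intro: order_trans[OF norm_ge_zero]\<close>)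
      finally show ?thesis .
    qed
    then show "AE x in lborel. x \<in> cball 0 R \<longrightarrow> cmod (of_real (indicator cube (x - n) * g x) * P x) \<le> Bg * BP"
      by auto
    show "AE x in lborel. x \<notin> cball 0 R \<longrightarrow> complex_of_real (indicator cube (x - n) * g x) * P x = 0"
      using gs by (auto simp: dist_norm)
  qed simp
  have "(\<integral>v. of_real (g v) * P v \<partial>lborel) = (\<integral>v. (\<Sum>n\<in>D. of_real (indicator cube (v - n) * g v) * P v) \<partial>lborel)"
    by (intro Bochner_Integration.integral_cong refl step1)
  also have "\<dots> = (\<Sum>n\<in>D. \<integral>v. of_real (indicator cube (v - n) * g v) * P v \<partial>lborel)"
    by (rule Bochner_Integration.integral_sum) (rule integ)
  also have "\<dots> = (\<Sum>n\<in>D. \<integral>u. of_real (indicator cube u) * (of_real (g (u + n)) * P u) \<partial>lborel)"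
  proof (rule sum.cong)
    fix n assume n: "n \<in> D"
    have "(\<integral>v. of_real (indicator cube (v - n) * g v) * P v \<partial>lborel)
        = (\<integral>u. of_real (indicator cube (u + n - n) * g (u + n)) * P (u + n) \<partial>lborel)"
      by (rule lborel_translate) (use gm Pm in simp)
    also have "\<dots> = (\<integral>u. of_real (indicator cube u) * (of_real (g (u + n)) * P u) \<partial>lborel)"
      using per[of n] D n by (auto simp: mult.assoc)
    finally show "(\<integral>v. of_real (indicator cube (v - n) * g v) * P v \<partial>lborel)
        = (\<integral>u. of_real (indicator cube u) * (of_real (g (u + n)) * P u) \<partial>lborel)" .
  qed simp
  also have "\<dots> = (\<integral>u. (\<Sum>n\<in>D. of_real (indicator cube u) * (of_real (g (u + n)) * P u)) \<partial>lborel)"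
  proof (rule Bochner_Integration.integral_sum[symmetric])
    fix n
    have "bmc (\<lambda>u. of_real (g (u + n)) * P u)"
    proof (rule bmc_mult[OF bmc_real P])
      show "(\<lambda>u. g (u + n)) \<in> borel_measurable borel" using gm by simp
      show "\<bar>g (u + n)\<bar> \<le> Bg" for u by (rule gb)
    qed
    then show "integrable lborel (\<lambda>u. of_real (indicator cube u) * (of_real (g (u + n)) * P u))"
      by (rule bmc_integrable)
  qed
  also have "\<dots> = cint (\<lambda>u. of_real (\<Sum>n\<in>D. g (u + n)) * P u)"
    unfolding cint_def by (simp add: sum_distrib_left sum_distrib_right)
  finally show ?thesis .
qed

lemma floor_abs_bound: "\<bar>real_of_int \<lfloor>x\<rfloor>\<bar> \<le> \<bar>x\<bar> + 1"
  using of_int_floor_le[of x] real_of_int_floor_add_one_gt[of x] by linarith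

lemma norm_cube: "u \<in> cube \<Longrightarrow> norm u \<le> real CARD('d)" for u :: "real^'d"
proof -
  assume u: "u \<in> cube"
  have "norm u \<le> (\<Sum>i\<in>UNIV. \<bar>u $ i\<bar>)" by (rule norm_le_l1_cart)
  also have "\<dots> \<le> (\<Sum>i\<in>(UNIV::'d set). 1)"
  proof (rule sum_mono)
    fix i :: 'd
    have "0 \<le> u $ i" "u $ i < 1" using u unfolding cube_def by blast+
    then show "\<bar>u $ i\<bar> \<le> 1" by simp
  qed
  finally show ?thesis by simp
qed

lemma per_shift:
  fixes P :: "real^'d \<Rightarrow> complex"
  assumes P: "bmc P" and per: "\<And>u n. n \<in> int_lattice \<Longrightarrow> P (u + n) = P u"
  shows "cint (\<lambda>u. P (u + a)) = cint P"
proof -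
  have Pm: "P \<in> borel_measurable borel" using P by (simp add: bmc_def)
  define D where "D = {n::real^'d. n \<in> int_lattice \<and> (\<forall>i. \<bar>n $ i\<bar> \<le> norm a + 2)}"
  have D: "finite D" "D \<subseteq> int_lattice" unfolding D_def using lat_box_finite by auto
  define g where "g v = (indicator cube (v - a) :: real)" for v :: "real^'d"
  have "cint (\<lambda>u. P (u + a)) = (\<integral>u. of_real (indicator cube (u + a - a)) * P (u + a) \<partial>lborel)"
    by (simp add: cint_def)
  also have "\<dots> = (\<integral>v. of_real (g v) * P v \<partial>lborel)"
    using lborel_translate[of "\<lambda>v. of_real (g v) * P v" a] Pm by (simp add: g_def)
  also have "\<dots> = cint (\<lambda>u. of_real (\<Sum>n\<in>D. g (u + n)) * P u)"
  proof (rule tiling[where Bg=1 and R="norm a + real CARD('d)"])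
    show "g \<in> borel_measurable borel" unfolding g_def by simp
    show "\<bar>g v\<bar> \<le> 1" for v by (simp add: g_def indicator_def)
    show "norm v \<le> norm a + real CARD('d) \<and> fv v \<in> D" if "g v \<noteq> 0" for v
    proof
      have c: "v - a \<in> cube" using that by (simp add: g_def indicator_def split: if_splits)
      have "norm v \<le> norm a + norm (v - a)" using norm_triangle_ineq[of a "v - a"] by simp
      also have "\<dots> \<le> norm a + real CARD('d)" using norm_cube[OF c] by simp
      finally show "norm v \<le> norm a + real CARD('d)" .
      have "\<bar>fv v $ i\<bar> \<le> norm a + 2" for i
      proof -
        have "0 \<le> (v - a) $ i" "(v - a) $ i < 1" using c unfolding cube_def by blast+
        then have "\<bar>v $ i\<bar> \<le> \<bar>a $ i\<bar> + 1" by auto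
        moreover have "\<bar>a $ i\<bar> \<le> norm a" by (rule component_le_norm_cart)
        ultimately show ?thesis using floor_abs_bound[of "v $ i"] by (simp add: fv_def)
      qed
      then show "fv v \<in> D" unfolding D_def using fv_lat by auto
    qed
  qed (use P per D in auto)
  also have "\<dots> = cint P"
    unfolding cint_def
  proof (rule Bochner_Integration.integral_cong[OF refl])
    fix u :: "real^'d"
    show "of_real (indicator cube u) * (of_real (\<Sum>n\<in>D. g (u + n)) * P u) = of_real (indicator cube u) * P u"
    proof (cases "u \<in> cube")
      case True
      define m where "m = - fv (u - a)"
      have "(\<Sum>n\<in>D. g (u + n)) = (\<Sum>n\<in>D. indicator cube ((u - a) + n))"
        by (simp add: g_def algebra_simps)
      also have "\<dots> = 1"
      proof (rule sum_ind_cube_1[OF D(2) _ _ D(1)])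
        show "u - a + m \<in> cube" using fv_cube[of "u - a"] by (simp add: m_def)
        have "\<bar>m $ i\<bar> \<le> norm a + 2" for i
        proof -
          have "0 \<le> u $ i" "u $ i < 1" using True unfolding cube_def by blast+
          then have "\<bar>(u - a) $ i\<bar> \<le> \<bar>a $ i\<bar> + 1" by auto
          moreover have "\<bar>a $ i\<bar> \<le> norm a" by (rule component_le_norm_cart)
          ultimately show ?thesis using floor_abs_bound[of "(u - a) $ i"] by (simp add: m_def fv_def)
        qed
        then show "m \<in> D" unfolding D_def m_def using lat_uminus[OF fv_lat] by auto
      qed
      finally show ?thesis by simp
    next
      case False then show ?thesis by simp
    qed
  qed
  finally show ?thesis .
qed

lemma ee_periodic:
  assumes "m \<in> int_lattice" "n \<in> int_lattice"
  shows "ee (m \<bullet> (u + n)) = ee (m \<bullet> u)"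
  using ee_int[OF lat_inner_Ints[OF assms]] by (simp add: inner_add_right ee_add)

lemma orth:
  fixes m :: "real^'d"
  assumes m: "m \<in> int_lattice"
  shows "cint (\<lambda>u. ee (m \<bullet> u)) = (if m = 0 then 1 else 0)"
proof (cases "m = 0")
  case True
  have "cint (\<lambda>u. ee (m \<bullet> u)) = (\<integral>u. of_real (indicator cube (u::real^'d)) \<partial>lborel)"
    by (simp add: cint_def True)
  also have "\<dots> = of_real (measure lborel (cube :: (real^'d) set))"
    by (simp add: integral_complex_of_real)
  also have "\<dots> = 1" by (simp add: measure_def cube_measure)
  finally show ?thesis using True by simp
next
  case False
  then obtain j where j: "m $ j \<noteq> 0" by (metis vec_eq_iff zero_index)
  define a where "a = axis j (1 / (2 * m $ j))"
  have ma: "m \<bullet> a = 1/2" using j by (simp add: a_def inner_axis)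
  have "cint (\<lambda>u. ee (m \<bullet> (u + a))) = cint (\<lambda>u. ee (m \<bullet> u))"
    by (rule per_shift) (use ee_periodic[OF m] in auto)
  moreover have "cint (\<lambda>u. ee (m \<bullet> (u + a))) = - cint (\<lambda>u. ee (m \<bullet> u))"
  proof -
    have "(\<lambda>u. ee (m \<bullet> (u + a))) = (\<lambda>u. (-1) * ee (m \<bullet> u))"
      by (simp add: inner_add_right ee_add ma ee_half)
    then show ?thesis using cint_cmult[of "-1" "\<lambda>u. ee (m \<bullet> u)"] by simp
  qed
  ultimately show ?thesis using False by simp
qed

lemma bmc_ee2 [intro]: "bmc (\<lambda>u. ee (- (l \<bullet> u)))"
  by (auto simp: bmc_def)

lemma cint_real_nonneg:
  fixes h :: "real^'d \<Rightarrow> real"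
  assumes "\<And>u. 0 \<le> h u"
  shows "0 \<le> Re (cint (\<lambda>u. of_real (h u)))"
proof -
  have "cint (\<lambda>u. of_real (h u)) = of_real (\<integral>u. indicator cube u * h u \<partial>lborel)"
    unfolding cint_def by (simp add: integral_complex_of_real[symmetric])
  moreover have "0 \<le> (\<integral>u. indicator cube u * h (u::real^'d) \<partial>lborel)"
    by (rule Bochner_Integration.integral_nonneg) (use assms in \<open>auto simp: indicator_def\<close>)
  ultimately show ?thesis by simp
qed

lemma bessel:
  fixes f :: "real^'d \<Rightarrow> real" and \<Lambda> :: "(real^'d) set"
  assumes fm: "f \<in> borel_measurable borel" and fb: "\<And>u. \<bar>f u\<bar> \<le> B"
    and \<Lambda>: "finite \<Lambda>" "\<Lambda> \<subseteq> int_lattice"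
  shows "(\<Sum>l\<in>\<Lambda>. (cmod (cint (\<lambda>u. of_real (f u) * ee (- (l \<bullet> u)))))\<^sup>2)
          \<le> Re (cint (\<lambda>u. of_real (f u) * of_real (f u)))"
proof -
  define F where "F u = (of_real (f u) :: complex)" for u
  define fc where "fc l = cint (\<lambda>u. F u * ee (- (l \<bullet> u)))" for l
  define Pl where "Pl u = (\<Sum>l\<in>\<Lambda>. fc l * ee (l \<bullet> u))" for u
  define S where "S = (\<Sum>l\<in>\<Lambda>. fc l * cnj (fc l))"
  have bF: "bmc F" unfolding F_def using fm fb by (rule bmc_real)
  have bPl: "bmc Pl" unfolding Pl_def by (intro bmc_sum bmc_mult bmc_const bmc_ee)
  have bFe: "bmc (\<lambda>u. F u * ee (c \<bullet> u))" for c by (intro bmc_mult bF bmc_ee)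
  have cF: "cnj (F u) = F u" for u by (simp add: F_def)
  have a: "cint (\<lambda>u. F u * cnj (Pl u)) = S"
  proof -
    have "(\<lambda>u. F u * cnj (Pl u)) = (\<lambda>u. \<Sum>l\<in>\<Lambda>. cnj (fc l) * (F u * ee (- (l \<bullet> u))))"
      by (simp add: Pl_def sum_distrib_left cnj_ee mult_ac)
    moreover have "cint (\<lambda>u. \<Sum>l\<in>\<Lambda>. cnj (fc l) * (F u * ee (- (l \<bullet> u)))) = (\<Sum>l\<in>\<Lambda>. cint (\<lambda>u. cnj (fc l) * (F u * ee (- (l \<bullet> u)))))"
      by (rule cint_sum) (intro bmc_mult bmc_const bF bmc_ee2)
    ultimately have "cint (\<lambda>u. F u * cnj (Pl u)) = (\<Sum>l\<in>\<Lambda>. cnj (fc l) * fc l)"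
      by (simp add: cint_cmult fc_def)
    then show ?thesis by (simp add: S_def mult.commute)
  qed
  have Sreal: "cnj S = S" by (simp add: S_def mult.commute)
  have b: "cint (\<lambda>u. Pl u * cnj (F u)) = S"
  proof -
    have eq: "(\<lambda>u. Pl u * cnj (F u)) = (\<lambda>u. cnj (F u * cnj (Pl u)))"
      by (rule ext) (simp add: mult.commute)
    have "cint (\<lambda>u. Pl u * cnj (F u)) = cint (\<lambda>u. cnj (F u * cnj (Pl u)))"
      by (simp only: eq)
    also have "\<dots> = cnj (cint (\<lambda>u. F u * cnj (Pl u)))" by (rule cint_cnj)
    finally show ?thesis using a Sreal by simp
  qed
  have c: "cint (\<lambda>u. Pl u * cnj (Pl u)) = S"
  proof -
    have eeP: "ee ((l - l') \<bullet> u) = ee (l \<bullet> u) * ee (- (l' \<bullet> u))" for l l' u :: "real^'d"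
      by (simp add: inner_diff_left ee_add[symmetric])
    have "Pl u * cnj (Pl u) = (\<Sum>l\<in>\<Lambda>. \<Sum>l'\<in>\<Lambda>. (fc l * cnj (fc l')) * ee ((l - l') \<bullet> u))" for u
    proof -
      have "Pl u * cnj (Pl u) = (\<Sum>l\<in>\<Lambda>. fc l * ee (l \<bullet> u)) * (\<Sum>l'\<in>\<Lambda>. cnj (fc l') * ee (- (l' \<bullet> u)))"
        by (simp add: Pl_def cnj_ee)
      also have "\<dots> = (\<Sum>l\<in>\<Lambda>. \<Sum>l'\<in>\<Lambda>. (fc l * ee (l \<bullet> u)) * (cnj (fc l') * ee (- (l' \<bullet> u))))"
        by (rule sum_product)
      also have "\<dots> = (\<Sum>l\<in>\<Lambda>. \<Sum>l'\<in>\<Lambda>. (fc l * cnj (fc l')) * ee ((l - l') \<bullet> u))"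
        by (intro sum.cong refl) (simp add: eeP mult_ac)
      finally show ?thesis .
    qed
    then have "(\<lambda>u. Pl u * cnj (Pl u)) = (\<lambda>u. \<Sum>l\<in>\<Lambda>. \<Sum>l'\<in>\<Lambda>. (fc l * cnj (fc l')) * ee ((l - l') \<bullet> u))"
      by (rule ext)
    then have "cint (\<lambda>u. Pl u * cnj (Pl u)) = (\<Sum>l\<in>\<Lambda>. \<Sum>l'\<in>\<Lambda>. (fc l * cnj (fc l')) * cint (\<lambda>u. ee ((l - l') \<bullet> u)))"
      by (simp add: cint_sum cint_cmult bmc_sum bmc_mult bmc_const bmc_ee)
    also have "\<dots> = (\<Sum>l\<in>\<Lambda>. \<Sum>l'\<in>\<Lambda>. if l' = l then fc l * cnj (fc l') else 0)"
    proof (intro sum.cong refl)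
      fix l l' assume "l \<in> \<Lambda>" "l' \<in> \<Lambda>"
      then have "l - l' \<in> int_lattice" using \<Lambda> by (intro lat_diff) auto
      then show "fc l * cnj (fc l') * cint (\<lambda>u. ee ((l - l') \<bullet> u)) = (if l' = l then fc l * cnj (fc l') else 0)"
        by (simp add: orth)
    qed
    also have "\<dots> = S" using \<Lambda>(1) by (simp add: S_def)
    finally show ?thesis .
  qed
  have expand: "(\<lambda>u. (F u - Pl u) * cnj (F u - Pl u)) =
     (\<lambda>u. F u * F u - F u * cnj (Pl u) - Pl u * cnj (F u) + Pl u * cnj (Pl u))"
    by (simp add: algebra_simps cF)
  have "cint (\<lambda>u. (F u - Pl u) * cnj (F u - Pl u)) = cint (\<lambda>u. F u * F u) - S - S + S"
    unfolding expand using a b c bF bPl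
    by (simp add: cint_add cint_diff bmc_mult bmc_cnj bmc_diff bmc_add)
  moreover have "0 \<le> Re (cint (\<lambda>u. (F u - Pl u) * cnj (F u - Pl u)))"
  proof -
    have "(\<lambda>u. (F u - Pl u) * cnj (F u - Pl u)) = (\<lambda>u. of_real ((cmod (F u - Pl u))\<^sup>2))"
      by (rule ext) (rule complex_norm_square[symmetric])
    then show ?thesis using cint_real_nonneg[of "\<lambda>u. (cmod (F u - Pl u))\<^sup>2"] by simp
  qed
  ultimately have "Re S \<le> Re (cint (\<lambda>u. F u * F u))" by simp
  moreover have "Re S = (\<Sum>l\<in>\<Lambda>. (cmod (fc l))\<^sup>2)"
    by (simp add: S_def complex_norm_square[symmetric])
  ultimately show ?thesis by (simp add: fc_def F_def)
qed

definition phi :: "real \<Rightarrow> real^'d \<Rightarrow> real^'d \<Rightarrow> real" where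
  "phi \<rho> a u = (if norm (rv (u - a)) \<le> \<rho> then 1 else 0)"

lemma phi_meas [measurable]: "(\<lambda>u. phi \<rho> a u) \<in> borel_measurable borel"
  unfolding phi_def by measurable

lemma phi_bound: "\<bar>phi \<rho> a u\<bar> \<le> 1" "0 \<le> phi \<rho> a u" "phi \<rho> a u \<le> 1"
  by (auto simp: phi_def)

lemma phi_periodic: "n \<in> int_lattice \<Longrightarrow> phi \<rho> a (u + n) = phi \<rho> a u"
  using rv_periodic[of n "u - a"] by (simp add: phi_def algebra_simps)

definition Dset :: "real^'d \<Rightarrow> (real^'d) set" where
  "Dset a = {n. n \<in> int_lattice \<and> (\<forall>i. \<bar>n $ i\<bar> \<le> norm a + 2)}"

lemma Dset: "finite (Dset a)" "Dset a \<subseteq> int_lattice"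
  unfolding Dset_def using lat_box_finite by auto

lemma rv_comp: "\<bar>rv v $ i\<bar> \<le> 1/2"
  unfolding rv_def using of_int_round_abs_le[of "v $ i"] by (simp add: abs_minus_commute)

lemma sum_ind_ball:
  fixes a u :: "real^'d"
  assumes \<rho>: "0 < \<rho>" "\<rho> < 1/4" and u: "u \<in> cube"
  shows "(\<Sum>n\<in>Dset a. indicator (cball a \<rho>) (u + n) :: real) = phi \<rho> a u"
proof (cases "norm (rv (u - a)) \<le> \<rho>")
  case True
  define n0 where "n0 = rv (u - a) - (u - a)"
  have n0l: "n0 \<in> int_lattice" using lat_uminus[OF rv_lat[of "u - a"]] by (simp add: n0_def)
  have n0D: "n0 \<in> Dset a"
  proof -
    have "\<bar>n0 $ i\<bar> \<le> norm a + 2" for i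
    proof -
      have "0 \<le> u $ i" "u $ i < 1" using u unfolding cube_def by blast+
      moreover have "\<bar>a $ i\<bar> \<le> norm a" by (rule component_le_norm_cart)
      moreover have "\<bar>rv (u - a) $ i\<bar> \<le> 1/2" by (rule rv_comp)
      ultimately show ?thesis by (simp add: n0_def; linarith)
    qed
    then show ?thesis using n0l by (simp add: Dset_def)
  qed
  have n0b: "u + n0 \<in> cball a \<rho>" using True by (simp add: n0_def dist_norm)
  have "(\<Sum>n\<in>Dset a. indicator (cball a \<rho>) (u + n) :: real) = (\<Sum>n\<in>Dset a. if n = n0 then 1 else 0)"
  proof (rule sum.cong[OF refl])
    fix n assume n: "n \<in> Dset a"
    show "indicator (cball a \<rho>) (u + n) = (if n = n0 then 1 else (0::real))"
    proof (cases "u + n \<in> cball a \<rho>")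
      case True
      have "norm (n - n0) \<le> norm (a - (u + n0)) + norm (a - (u + n))"
        using norm_triangle_ineq4[of "a - (u + n0)" "a - (u + n)"] by (simp add: algebra_simps)
      also have "\<dots> \<le> 2 * \<rho>" using True n0b by (simp add: dist_norm)
      finally have "norm (n - n0) < 1" using \<rho> by simp
      then have "n = n0" using lat_eq[of n n0] n0l n Dset(2)[of a] by auto
      then show ?thesis using True by simp
    next
      case False
      then have "n \<noteq> n0" using n0b by blast
      then show ?thesis using False by simp
    qed
  qed
  also have "\<dots> = 1" using sum.delta[OF Dset(1)[of a], of n0 "\<lambda>_. 1::real"] n0D by simp
  finally show ?thesis using True by (simp add: phi_def)
next
  case False
  have "(\<Sum>n\<in>Dset a. indicator (cball a \<rho>) (u + n) :: real) = 0"
  proof (rule sum.neutral, rule ballI)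
    fix n assume n: "n \<in> Dset a"
    have "u + n \<notin> cball a \<rho>"
    proof
      assume "u + n \<in> cball a \<rho>"
      then have "norm (u + n - a) \<le> \<rho>" by (simp add: dist_norm norm_minus_commute)
      moreover have "norm (rv (u - a)) \<le> norm ((u - a) - (- n))"
        by (rule rv_min) (use n Dset(2)[of a] lat_uminus in auto)
      ultimately show False using False by (simp add: algebra_simps)
    qed
    then show "indicator (cball a \<rho>) (u + n) = (0::real)" by simp
  qed
  then show ?thesis using False by (simp add: phi_def)
qed

lemma ball_support:
  fixes a v :: "real^'d"
  assumes \<rho>: "0 < \<rho>" "\<rho> < 1/4" and "indicator (cball a \<rho>) v \<noteq> (0::real)"
  shows "norm v \<le> norm a + 1 \<and> fv v \<in> Dset a"
proof -
  have v: "norm (v - a) \<le> \<rho>" using assms(3) by (auto simp: indicator_def dist_norm norm_minus_commute split: if_splits)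
  have "norm v \<le> norm a + norm (v - a)" using norm_triangle_ineq[of a "v - a"] by simp
  then have "norm v \<le> norm a + 1" using v \<rho> by simp
  moreover have "\<bar>fv v $ i\<bar> \<le> norm a + 2" for i
  proof -
    have "\<bar>(v - a) $ i\<bar> \<le> norm (v - a)" by (rule component_le_norm_cart)
    moreover have "\<bar>a $ i\<bar> \<le> norm a" by (rule component_le_norm_cart)
    ultimately have "\<bar>v $ i\<bar> \<le> norm a + 1" using v \<rho> by simp
    then show ?thesis using floor_abs_bound[of "v $ i"] by (simp add: fv_def)
  qed
  ultimately show ?thesis using fv_lat by (simp add: Dset_def)
qed

definition bcoef :: "real \<Rightarrow> real^'d \<Rightarrow> complex" where
  "bcoef \<rho> l = (\<integral>w. of_real (indicator (cball 0 \<rho>) w) * ee (- (l \<bullet> w)) \<partial>lborel)"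

lemma phi_coef:
  fixes a l :: "real^'d"
  assumes \<rho>: "0 < \<rho>" "\<rho> < 1/4" and l: "l \<in> int_lattice"
  shows "cint (\<lambda>u. of_real (phi \<rho> a u) * ee (- (l \<bullet> u))) = ee (- (l \<bullet> a)) * bcoef \<rho> l"
proof -
  define P where "P u = ee (- (l \<bullet> u))" for u :: "real^'d"
  have bP: "bmc P" unfolding P_def by (rule bmc_ee2)
  have perP: "P (u + n) = P u" if "n \<in> int_lattice" for u n
  proof -
    have "l \<bullet> n \<in> \<int>" by (rule lat_inner_Ints[OF l that])
    then have "ee (- (l \<bullet> n)) = 1" by (intro ee_int) auto
    moreover have "ee (- (l \<bullet> u) - l \<bullet> n) = ee (- (l \<bullet> u)) * ee (- (l \<bullet> n))"
      using ee_add[of "-(l \<bullet> u)" "-(l \<bullet> n)"] by simp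
    ultimately show ?thesis by (simp add: P_def inner_add_right)
  qed
  have "(\<integral>v. of_real (indicator (cball a \<rho>) v) * P v \<partial>lborel)
      = cint (\<lambda>u. of_real (\<Sum>n\<in>Dset a. indicator (cball a \<rho>) (u + n)) * P u)"
  proof (rule tiling[where Bg=1 and R="norm a + 1"])
    show "norm v \<le> norm a + 1 \<and> fv v \<in> Dset a" if "indicator (cball a \<rho>) v \<noteq> (0::real)" for v
      by (rule ball_support[OF \<rho> that])
    show "\<bar>indicator (cball a \<rho>) v\<bar> \<le> (1::real)" for v by (simp add: indicator_def)
    show "(indicator (cball a \<rho>) :: real^'d \<Rightarrow> real) \<in> borel_measurable borel"
      by (intro borel_measurable_indicator) simp
    show "finite (Dset a)" "Dset a \<subseteq> int_lattice" by (rule Dset)+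
  qed (use bP perP in auto)
  also have "\<dots> = cint (\<lambda>u. of_real (phi \<rho> a u) * P u)"
    unfolding cint_def
  proof (rule Bochner_Integration.integral_cong[OF refl])
    fix u :: "real^'d"
    show "of_real (indicator cube u) * (of_real (\<Sum>n\<in>Dset a. indicator (cball a \<rho>) (u + n)) * P u) =
          of_real (indicator cube u) * (of_real (phi \<rho> a u) * P u)"
      using sum_ind_ball[OF \<rho>, of u a] by (cases "u \<in> cube") auto
  qed
  finally have 1: "cint (\<lambda>u. of_real (phi \<rho> a u) * P u) = (\<integral>v. of_real (indicator (cball a \<rho>) v) * P v \<partial>lborel)" ..
  have "(\<integral>v. of_real (indicator (cball a \<rho>) v) * P v \<partial>lborel)
      = (\<integral>w. of_real (indicator (cball a \<rho>) (w + a)) * P (w + a) \<partial>lborel)"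
  proof (rule lborel_translate[of "\<lambda>v. of_real (indicator (cball a \<rho>) v) * P v" a])
    have i: "(indicator (cball a \<rho>) :: real^'d \<Rightarrow> real) \<in> borel_measurable borel"
      by (intro borel_measurable_indicator) simp
    have p: "P \<in> borel_measurable borel" using bP unfolding bmc_def by simp
    show "(\<lambda>v. of_real (indicator (cball a \<rho>) v) * P v) \<in> borel_measurable borel"
      using i p by measurable
  qed
  also have "\<dots> = (\<integral>w. ee (- (l \<bullet> a)) * (of_real (indicator (cball 0 \<rho>) w) * ee (- (l \<bullet> w))) \<partial>lborel)"
  proof (rule Bochner_Integration.integral_cong[OF refl])
    fix w :: "real^'d"
    have "indicator (cball a \<rho>) (w + a) = (indicator (cball 0 \<rho>) w :: real)"
      by (simp add: indicator_def dist_norm)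
    then show "of_real (indicator (cball a \<rho>) (w + a)) * P (w + a) = ee (- (l \<bullet> a)) * (of_real (indicator (cball 0 \<rho>) w) * ee (- (l \<bullet> w)))"
      by (simp add: P_def inner_add_right ee_add[symmetric] add.commute)
  qed
  also have "\<dots> = ee (- (l \<bullet> a)) * bcoef \<rho> l"
    unfolding bcoef_def by (rule integral_mult_right_zero)
  finally show ?thesis using 1 by (simp add: P_def)
qed

lemma integrable_cball_ind: "integrable lborel (indicator (cball (a::real^'d) r) :: real^'d \<Rightarrow> real)"
  using emeasure_lborel_cball_finite[of a r] by (intro integrable_real_indicator) auto

lemma torus_dist_nonneg: "0 \<le> torus_dist a b"
  unfolding torus_dist_def
proof (rule cInf_greatest)
  show "{norm (a - b - k) |k. k \<in> int_lattice} \<noteq> {}" using lat_0 by blast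
qed auto

lemma measure_cball_any: "measure lborel (cball (a::real^'d) r) = measure lborel (cball (0::real^'d) r)"
  by (cases "r < 0") (auto simp: measure_def emeasure_cball)

lemma cball_shift: "(\<lambda>x. x - a) ` cball c r = cball (c - a) (r::real)" for a c :: "real^'d"
proof safe
  fix x assume "x \<in> cball c r" then show "x - a \<in> cball (c - a) r" by (simp add: dist_norm algebra_simps)
next
  fix y assume "y \<in> cball (c - a) r"
  then have "y + a \<in> cball c r" by (simp add: dist_norm algebra_simps)
  then show "y \<in> (\<lambda>x. x - a) ` cball c r" by (rule rev_image_eqI) simp
qed

lemma lens_translate:
  "measure lborel (cball (a::real^'d) \<rho> \<inter> cball c \<rho>) = lensH \<rho> (c - a)"
proof -
  have "(\<lambda>x. x - a) ` (cball a \<rho> \<inter> cball c \<rho>) = cball 0 \<rho> \<inter> cball (c - a) \<rho>"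
  proof -
    have "(\<lambda>x. x - a) ` cball a \<rho> = cball 0 \<rho>"
      using cball_shift[of a a \<rho>] by simp
    moreover have "(\<lambda>x. x - a) ` cball c \<rho> = cball (c - a) \<rho>"
      by (rule cball_shift)
    moreover have "inj (\<lambda>x::real^'d. x - a)" by (auto simp: inj_def)
    ultimately show ?thesis by (simp add: image_Int)
  qed
  then have "measure lebesgue (cball 0 \<rho> \<inter> cball (c - a) \<rho>) = measure lebesgue (cball a \<rho> \<inter> cball c \<rho>)"
    using measure_translation_subtract[of a "cball a \<rho> \<inter> cball c \<rho>"] by simp
  then show ?thesis unfolding lensH_def by (simp add: lens_lebesgue)
qed

lemma phi_pair:
  fixes a b :: "real^'d"
  assumes \<rho>: "0 < \<rho>" "\<rho> < 1/4"
  shows "Re (cint (\<lambda>u. of_real (phi \<rho> a u) * of_real (phi \<rho> b u))) = (\<integral>v. indicator (cball a \<rho>) v * phi \<rho> b v \<partial>lborel)"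
proof -
  define P where "P u = (of_real (phi \<rho> b u) :: complex)" for u :: "real^'d"
  have bP: "bmc P" unfolding P_def by (rule bmc_real[where B=1]) (auto intro: phi_bound)
  have perP: "P (u + n) = P u" if "n \<in> int_lattice" for u n
    using phi_periodic[OF that] by (simp add: P_def)
  have "(\<integral>v. of_real (indicator (cball a \<rho>) v) * P v \<partial>lborel)
      = cint (\<lambda>u. of_real (\<Sum>n\<in>Dset a. indicator (cball a \<rho>) (u + n)) * P u)"
  proof (rule tiling[where Bg=1 and R="norm a + 1"])
    show "norm v \<le> norm a + 1 \<and> fv v \<in> Dset a" if "indicator (cball a \<rho>) v \<noteq> (0::real)" for v
      by (rule ball_support[OF \<rho> that])
    show "\<bar>indicator (cball a \<rho>) v\<bar> \<le> (1::real)" for v by (simp add: indicator_def)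
    show "(indicator (cball a \<rho>) :: real^'d \<Rightarrow> real) \<in> borel_measurable borel"
      by (intro borel_measurable_indicator) simp
    show "finite (Dset a)" "Dset a \<subseteq> int_lattice" by (rule Dset)+
  qed (use bP perP in auto)
  also have "\<dots> = cint (\<lambda>u. of_real (phi \<rho> a u) * P u)"
    unfolding cint_def
  proof (rule Bochner_Integration.integral_cong[OF refl])
    fix u :: "real^'d"
    show "of_real (indicator cube u) * (of_real (\<Sum>n\<in>Dset a. indicator (cball a \<rho>) (u + n)) * P u) =
          of_real (indicator cube u) * (of_real (phi \<rho> a u) * P u)"
      using sum_ind_ball[OF \<rho>, of u a] by (cases "u \<in> cube") auto
  qed
  finally have "cint (\<lambda>u. of_real (phi \<rho> a u) * of_real (phi \<rho> b u)) =
      of_real (\<integral>v. indicator (cball a \<rho>) v * phi \<rho> b v \<partial>lborel)"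
    by (simp add: P_def integral_complex_of_real[symmetric])
  then show ?thesis by simp
qed

lemma pair_int_le_ball:
  fixes a b :: "real^'d"
  shows "(\<integral>v. indicator (cball a \<rho>) v * phi \<rho> b v \<partial>lborel) \<le> measure lborel (cball (0::real^'d) \<rho>)"
proof -
  have "(\<integral>v. indicator (cball a \<rho>) v * phi \<rho> b v \<partial>lborel) \<le> (\<integral>v. indicator (cball a \<rho>) v \<partial>lborel)"
  proof -
    have ii: "integrable lborel (indicator (cball a \<rho>) :: real^'d \<Rightarrow> real)"
      by (rule integrable_cball_ind)
    show ?thesis by (rule integral_mono'[OF ii]) (simp_all add: indicator_def phi_def)
  qed
  also have "\<dots> = measure lborel (cball (0::real^'d) \<rho>)"
    using measure_cball_any[of a \<rho>] by simp
  finally show ?thesis .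
qed

lemma pair_int_le_U:
  fixes a b :: "real^'d" and Uf :: "real \<Rightarrow> real"
  assumes \<rho>: "0 < \<rho>" "\<rho> < 1/4"
    and U: "\<And>y::real^'d. lensH \<rho> y \<le> Uf (norm y)" and Uanti: "\<And>r r'. 0 \<le> r \<Longrightarrow> r \<le> r' \<Longrightarrow> Uf r' \<le> Uf r"
    and Unn: "\<And>r. 0 \<le> Uf r"
  shows "(\<integral>v. indicator (cball a \<rho>) v * phi \<rho> b v \<partial>lborel) \<le> Uf (torus_dist a b)"
proof -
  have key: "\<exists>q'\<in>int_lattice. norm (a - b - q') \<le> 2 * \<rho> \<and> norm (v - b - q') \<le> \<rho>"
    if "v \<in> cball a \<rho>" "phi \<rho> b v = 1" for v
  proof -
    define q' where "q' = (v - b) - rv (v - b)"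
    have q'l: "q' \<in> int_lattice" unfolding q'_def by (rule rv_lat)
    have 1: "norm (v - b - q') \<le> \<rho>" using that(2) by (simp add: q'_def phi_def split: if_splits)
    have e: "a - b - q' = (a - v) + (v - b - q')" by (simp add: algebra_simps)
    have "norm (a - b - q') \<le> norm (a - v) + norm (v - b - q')"
      by (subst e) (rule norm_triangle_ineq)
    also have "\<dots> \<le> 2 * \<rho>" using that(1) 1 by (simp add: dist_norm)
    finally show ?thesis using q'l 1 by blast
  qed
  show ?thesis
  proof (cases "\<exists>q\<in>int_lattice. norm (a - b - q) \<le> 2 * \<rho>")
    case True
    then obtain q where q: "q \<in> int_lattice" "norm (a - b - q) \<le> 2 * \<rho>" by blast
    have pw: "indicator (cball a \<rho>) v * phi \<rho> b v \<le> indicator (cball a \<rho> \<inter> cball (b + q) \<rho>) v" for v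
    proof (cases "v \<in> cball a \<rho> \<and> phi \<rho> b v = 1")
      case True
      then obtain q' where q': "q' \<in> int_lattice" "norm (a - b - q') \<le> 2 * \<rho>" "norm (v - b - q') \<le> \<rho>"
        using key by blast
      have "norm (q - q') \<le> norm (a - b - q') + norm (a - b - q)"
        using norm_triangle_ineq4[of "a - b - q'" "a - b - q"] by (simp add: algebra_simps)
      also have "\<dots> < 1" using q'(2) q(2) \<rho> by simp
      finally have "q = q'" using lat_eq[OF q(1) q'(1)] by simp
      then have "v \<in> cball (b + q) \<rho>" using q'(3) by (simp add: dist_norm norm_minus_commute algebra_simps)
      then show ?thesis using True by (simp add: indicator_def)
    next
      case False
      then show ?thesis by (auto simp: indicator_def phi_def)
    qed
    have "(\<integral>v. indicator (cball a \<rho>) v * phi \<rho> b v \<partial>lborel) \<le> (\<integral>v. indicator (cball a \<rho> \<inter> cball (b + q) \<rho>) v \<partial>lborel)"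
    proof -
      have ii: "integrable lborel (indicator (cball a \<rho> \<inter> cball (b + q) \<rho>) :: real^'d \<Rightarrow> real)"
        by (rule integrable_real_indicator) (use lens_fmeas[of a \<rho> "b + q"] in \<open>auto simp: fmeasurable_def\<close>)
      show ?thesis by (rule integral_mono'[OF ii]) (use pw in \<open>auto simp: indicator_def\<close>)
    qed
    also have "\<dots> = lensH \<rho> (b + q - a)"
      using lens_translate[of a \<rho> "b + q"] by simp
    also have "\<dots> \<le> Uf (norm (b + q - a))" by (rule U)
    also have "\<dots> \<le> Uf (torus_dist a b)"
    proof (rule Uanti[OF torus_dist_nonneg])
      have "torus_dist a b \<le> norm (a - b - q)" by (rule torus_dist_le[OF q(1)])
      then show "torus_dist a b \<le> norm (b + q - a)" by (simp add: norm_minus_commute algebra_simps)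
    qed
    finally show ?thesis .
  next
    case False
    have "indicator (cball a \<rho>) v * phi \<rho> b v = 0" for v
      using key[of v] False by (auto simp: indicator_def phi_def)
    then have "(\<lambda>v. indicator (cball a \<rho>) v * phi \<rho> b v) = (\<lambda>v. 0::real)" by (rule ext)
    then show ?thesis using Unn[of "torus_dist a b"] by simp
  qed
qed

lemma bcoef_0: "bcoef \<rho> (0::real^'d) = of_real (measure lborel (cball (0::real^'d) \<rho>))"
  unfolding bcoef_def by (simp add: integral_complex_of_real)

lemma bcoef_lower:
  fixes l :: "real^'d"
  assumes \<rho>: "0 < \<rho>" and l: "norm l * \<rho> \<le> 1/6"
  shows "measure lborel (cball (0::real^'d) \<rho>) / 2 \<le> cmod (bcoef \<rho> l)"
proof -
  have int: "integrable lborel (\<lambda>w. of_real (indicator (cball 0 \<rho>) w) * ee (- (l \<bullet> w)))"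
  proof (rule integrableI_bounded_set[where A="cball 0 \<rho>" and B=1])
    show "emeasure lborel (cball (0::real^'d) \<rho>) < \<infinity>" by (rule emeasure_lborel_cball_finite)
    have i: "(indicator (cball 0 \<rho>) :: real^'d \<Rightarrow> real) \<in> borel_measurable borel"
      by (intro borel_measurable_indicator) simp
    then show "(\<lambda>w. of_real (indicator (cball 0 \<rho>) w) * ee (- (l \<bullet> w))) \<in> borel_measurable lborel"
      by measurable
  qed (auto simp: norm_mult indicator_def)
  have "Re (bcoef \<rho> l) = (\<integral>w. Re (of_real (indicator (cball 0 \<rho>) w) * ee (- (l \<bullet> w))) \<partial>lborel)"
    unfolding bcoef_def by (rule integral_Re[symmetric, OF int])
  also have "\<dots> = (\<integral>w. indicator (cball 0 \<rho>) w * cos (2 * pi * (- (l \<bullet> w))) \<partial>lborel)"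
    by (simp add: ee_def)
  also have "\<dots> \<ge> (\<integral>w. indicator (cball 0 \<rho>) (w::real^'d) * (1/2) \<partial>lborel)"
  proof (rule Bochner_Integration.integral_mono)
    show "integrable lborel (\<lambda>w. indicator (cball (0::real^'d) \<rho>) w * (1 / 2 :: real))"
      by (intro integrable_mult_left integrable_cball_ind)
    have "integrable lborel (\<lambda>w. Re (of_real (indicator (cball 0 \<rho>) w) * ee (- (l \<bullet> w))))"
      using int by (rule integrable_Re)
    then show "integrable lborel (\<lambda>w. indicator (cball (0::real^'d) \<rho>) w * cos (2 * pi * (- (l \<bullet> w))))"
      by (simp add: ee_def)
    fix w :: "real^'d"
    show "indicator (cball 0 \<rho>) w * (1/2) \<le> indicator (cball 0 \<rho>) w * cos (2 * pi * (- (l \<bullet> w)))"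
    proof (cases "w \<in> cball 0 \<rho>")
      case True
      have "\<bar>l \<bullet> w\<bar> \<le> norm l * norm w" by (rule Cauchy_Schwarz_ineq2)
      also have "\<dots> \<le> norm l * \<rho>" using True by (intro mult_left_mono) auto
      finally have lw: "\<bar>l \<bullet> w\<bar> \<le> 1/6" using l by simp
      have "cos (pi / 3) \<le> cos (2 * pi * \<bar>l \<bullet> w\<bar>)"
        by (rule cos_monotone_0_pi_le) (use lw pi_gt_zero in auto)
      moreover have "cos (2 * pi * (- (l \<bullet> w))) = cos (2 * pi * \<bar>l \<bullet> w\<bar>)"
        by (cases "0 \<le> l \<bullet> w") (simp_all add: abs_if)
      ultimately show ?thesis using True by (simp add: cos_60)
    next
      case False then show ?thesis by simp
    qed
  qed
  finally have "(\<integral>w. indicator (cball 0 \<rho>) (w::real^'d) * (1/2) \<partial>lborel) \<le> Re (bcoef \<rho> l)" .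
  moreover have "(\<integral>w. indicator (cball 0 \<rho>) (w::real^'d) * (1/2) \<partial>lborel) = measure lborel (cball (0::real^'d) \<rho>) / 2"
    by simp
  ultimately show ?thesis using complex_Re_le_cmod[of "bcoef \<rho> l"] by linarith
qed

lemma exp_ee: "exp (complex_of_real (2 * pi * t) * \<i>) = ee t"
  by (simp add: ee_def cis_conv_exp mult.commute)

lemma main_ineq:
  fixes x :: "nat \<Rightarrow> real^'d" and Uf :: "real \<Rightarrow> real" and \<Lambda> :: "(real^'d) set"
  assumes \<rho>: "0 < \<rho>" "\<rho> < 1/4"
    and U: "\<And>y::real^'d. lensH \<rho> y \<le> Uf (norm y)" and Uanti: "\<And>r r'. 0 \<le> r \<Longrightarrow> r \<le> r' \<Longrightarrow> Uf r' \<le> Uf r"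
    and Unn: "\<And>r. 0 \<le> Uf r"
    and \<Lambda>: "finite \<Lambda>" "\<Lambda> \<subseteq> int_lattice" "0 \<notin> \<Lambda>" "\<And>l. l \<in> \<Lambda> \<Longrightarrow> norm l * \<rho> \<le> 1/6"
  defines "V \<equiv> measure lborel (cball (0::real^'d) \<rho>)"
  shows "V\<^sup>2 * (real N)\<^sup>2 + (V/2)\<^sup>2 * (\<Sum>l\<in>\<Lambda>. (norm (\<Sum>k=1..N. exp (complex_of_real (2 * pi * (l \<bullet> x k)) * \<i>)))\<^sup>2)
         \<le> real N * V + (\<Sum>k\<in>{1..N}. \<Sum>k'\<in>{1..N} - {k}. Uf (torus_dist (x k) (x k')))"
proof -
  define f where "f u = (\<Sum>k\<in>{1..N}. phi \<rho> (x k) u)" for u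
  have fm: "f \<in> borel_measurable borel" unfolding f_def by measurable
  have fb: "\<bar>f u\<bar> \<le> real N" for u
  proof -
    have "\<bar>f u\<bar> \<le> (\<Sum>k\<in>{1..N}. \<bar>phi \<rho> (x k) u\<bar>)" unfolding f_def by (rule sum_abs)
    also have "\<dots> \<le> (\<Sum>k\<in>{1..N}. 1)" by (rule sum_mono) (rule phi_bound)
    finally show ?thesis by simp
  qed
  define fc where "fc l = cint (\<lambda>u. of_real (f u) * ee (- (l \<bullet> u)))" for l
  have fc_eq: "fc l = bcoef \<rho> l * (\<Sum>k\<in>{1..N}. ee (- (l \<bullet> x k)))" if "l \<in> int_lattice" for l
  proof -
    have "fc l = cint (\<lambda>u. \<Sum>k\<in>{1..N}. of_real (phi \<rho> (x k) u) * ee (- (l \<bullet> u)))"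
      by (simp add: fc_def f_def sum_distrib_right)
    also have "\<dots> = (\<Sum>k\<in>{1..N}. cint (\<lambda>u. of_real (phi \<rho> (x k) u) * ee (- (l \<bullet> u))))"
      by (rule cint_sum) (intro bmc_mult bmc_ee2 bmc_real[where B=1] phi_meas phi_bound)
    also have "\<dots> = (\<Sum>k\<in>{1..N}. ee (- (l \<bullet> x k)) * bcoef \<rho> l)"
      by (intro sum.cong refl phi_coef[OF \<rho> that])
    finally show ?thesis by (simp add: sum_distrib_left mult.commute)
  qed
  have bes: "(\<Sum>l\<in>insert 0 \<Lambda>. (cmod (fc l))\<^sup>2) \<le> Re (cint (\<lambda>u. of_real (f u) * of_real (f u)))"
    unfolding fc_def by (rule bessel[OF fm fb]) (use \<Lambda> lat_0 in auto)
  have c0: "(cmod (fc 0))\<^sup>2 = V\<^sup>2 * (real N)\<^sup>2"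
    using fc_eq[OF lat_0] by (simp add: bcoef_0 V_def norm_mult power_mult_distrib)
  have cl: "(V/2)\<^sup>2 * (norm (\<Sum>k=1..N. exp (complex_of_real (2 * pi * (l \<bullet> x k)) * \<i>)))\<^sup>2 \<le> (cmod (fc l))\<^sup>2"
    if l: "l \<in> \<Lambda>" for l
  proof -
    have lZ: "l \<in> int_lattice" using l \<Lambda> by auto
    define SS where "SS = (\<Sum>k=1..N. exp (complex_of_real (2 * pi * (l \<bullet> x k)) * \<i>))"
    have e: "(\<Sum>k=1..N. ee (- (l \<bullet> x k))) = cnj SS"
      unfolding SS_def by (simp only: exp_ee cnj_sum cnj_ee)
    have "cmod (fc l) = cmod (bcoef \<rho> l) * cmod (cnj SS)"
      by (simp only: fc_eq[OF lZ] e norm_mult)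
    then have fcS: "cmod (fc l) = cmod (bcoef \<rho> l) * cmod SS"
      by (simp only: complex_mod_cnj)
    have Vb: "V / 2 \<le> cmod (bcoef \<rho> l)"
      unfolding V_def by (rule bcoef_lower[OF \<rho>(1) \<Lambda>(4)[OF l]])
    have V0: "0 \<le> V" by (simp add: V_def)
    have "V / 2 * cmod SS \<le> cmod (fc l)"
      unfolding fcS by (rule mult_right_mono[OF Vb norm_ge_zero])
    then have "(V / 2 * cmod SS)\<^sup>2 \<le> (cmod (fc l))\<^sup>2"
      by (rule power_mono) (use V0 in simp)
    moreover have "(V / 2 * cmod SS)\<^sup>2 = (V/2)\<^sup>2 * (cmod SS)\<^sup>2" by (rule power_mult_distrib)
    ultimately show ?thesis unfolding SS_def by simp
  qed
  have lhs: "V\<^sup>2 * (real N)\<^sup>2 + (V/2)\<^sup>2 * (\<Sum>l\<in>\<Lambda>. (norm (\<Sum>k=1..N. exp (complex_of_real (2 * pi * (l \<bullet> x k)) * \<i>)))\<^sup>2)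
      \<le> (\<Sum>l\<in>insert 0 \<Lambda>. (cmod (fc l))\<^sup>2)"
  proof -
    have "(V/2)\<^sup>2 * (\<Sum>l\<in>\<Lambda>. (norm (\<Sum>k=1..N. exp (complex_of_real (2 * pi * (l \<bullet> x k)) * \<i>)))\<^sup>2) \<le> (\<Sum>l\<in>\<Lambda>. (cmod (fc l))\<^sup>2)"
      unfolding sum_distrib_left by (rule sum_mono) (rule cl)
    then show ?thesis using \<Lambda>(1,3) c0 by simp
  qed
  have rhs: "Re (cint (\<lambda>u. of_real (f u) * of_real (f u)))
      = (\<Sum>k\<in>{1..N}. \<Sum>k'\<in>{1..N}. (\<integral>v. indicator (cball (x k) \<rho>) v * phi \<rho> (x k') v \<partial>lborel))"
  proof -
    have "(\<lambda>u. of_real (f u) * of_real (f u)) = (\<lambda>u. \<Sum>k\<in>{1..N}. \<Sum>k'\<in>{1..N}. of_real (phi \<rho> (x k) u) * of_real (phi \<rho> (x k') u) :: complex)"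
      by (rule ext) (simp add: f_def sum_product)
    then have "cint (\<lambda>u. of_real (f u) * of_real (f u)) = (\<Sum>k\<in>{1..N}. \<Sum>k'\<in>{1..N}. cint (\<lambda>u. of_real (phi \<rho> (x k) u) * of_real (phi \<rho> (x k') u)))"
      by (simp add: cint_sum bmc_sum bmc_mult bmc_real[where B=1] phi_bound)
    then show ?thesis by (simp add: phi_pair[OF \<rho>])
  qed
  have inner: "(\<Sum>k'\<in>{1..N}. (\<integral>v. indicator (cball (x k) \<rho>) v * phi \<rho> (x k') v \<partial>lborel))
      \<le> V + (\<Sum>k'\<in>{1..N} - {k}. Uf (torus_dist (x k) (x k')))" if k: "k \<in> {1..N}" for k
  proof -
    have "(\<Sum>k'\<in>{1..N}. (\<integral>v. indicator (cball (x k) \<rho>) v * phi \<rho> (x k') v \<partial>lborel))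
        = (\<integral>v. indicator (cball (x k) \<rho>) v * phi \<rho> (x k) v \<partial>lborel)
          + (\<Sum>k'\<in>{1..N} - {k}. (\<integral>v. indicator (cball (x k) \<rho>) v * phi \<rho> (x k') v \<partial>lborel))"
      using k by (subst sum.remove[of _ k]) auto
    also have "\<dots> \<le> V + (\<Sum>k'\<in>{1..N} - {k}. Uf (torus_dist (x k) (x k')))"
    proof (rule add_mono)
      show "(\<integral>v. indicator (cball (x k) \<rho>) v * phi \<rho> (x k) v \<partial>lborel) \<le> V"
        unfolding V_def by (rule pair_int_le_ball)
      show "(\<Sum>k'\<in>{1..N} - {k}. (\<integral>v. indicator (cball (x k) \<rho>) v * phi \<rho> (x k') v \<partial>lborel))
          \<le> (\<Sum>k'\<in>{1..N} - {k}. Uf (torus_dist (x k) (x k')))"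
        by (rule sum_mono) (rule pair_int_le_U[OF \<rho> U Uanti Unn])
    qed
    finally show ?thesis .
  qed
  have "Re (cint (\<lambda>u. of_real (f u) * of_real (f u))) \<le> (\<Sum>k\<in>{1..N}. V + (\<Sum>k'\<in>{1..N} - {k}. Uf (torus_dist (x k) (x k'))))"
    unfolding rhs by (rule sum_mono) (rule inner)
  also have "\<dots> = real N * V + (\<Sum>k\<in>{1..N}. \<Sum>k'\<in>{1..N} - {k}. Uf (torus_dist (x k) (x k')))"
    by (simp add: sum.distrib)
  finally show ?thesis using lhs bes by linarith
qed

definition hfun :: "'d::finite itself \<Rightarrow> real \<Rightarrow> real \<Rightarrow> real" where
  "hfun _ \<rho> r = lensH \<rho> (r *\<^sub>R axis (undefined::'d) 1 :: real^'d)"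

definition tt :: "real \<Rightarrow> nat \<Rightarrow> nat \<Rightarrow> real" where
  "tt \<rho> M j = 2 * \<rho> * real j / real M"

definition Ufun :: "'d::finite itself \<Rightarrow> real \<Rightarrow> nat \<Rightarrow> real \<Rightarrow> real" where
  "Ufun D \<rho> M r = (\<Sum>j<M. (hfun D \<rho> (tt \<rho> M j) - hfun D \<rho> (tt \<rho> M (Suc j))) * of_bool (r \<le> tt \<rho> M (Suc j)))
     + hfun D \<rho> (tt \<rho> M M) * of_bool (r \<le> tt \<rho> M M)"

definition Lfun :: "'d::finite itself \<Rightarrow> real \<Rightarrow> nat \<Rightarrow> real \<Rightarrow> real" where
  "Lfun D \<rho> M r = (\<Sum>j<M. (hfun D \<rho> (tt \<rho> M j) - hfun D \<rho> (tt \<rho> M (Suc j))) * of_bool (r \<le> tt \<rho> M j))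
     + hfun D \<rho> (tt \<rho> M M) * of_bool (r \<le> tt \<rho> M M)"

lemma hfun_norm: "hfun TYPE('d::finite) \<rho> (norm y) = lensH \<rho> (y::real^'d)"
  unfolding hfun_def by (rule lensH_radial) simp

lemma hfun_anti: "0 \<le> a \<Longrightarrow> a \<le> b \<Longrightarrow> hfun TYPE('d::finite) \<rho> b \<le> hfun TYPE('d::finite) \<rho> a"
  unfolding hfun_def by (rule lensH_antimono) simp

lemma hfun_nonneg: "0 \<le> hfun D \<rho> r"
  by (simp add: hfun_def lensH_nonneg)

lemma hfun_0: "hfun TYPE('d::finite) \<rho> 0 = measure lborel (cball (0::real^'d) \<rho>)"
  by (simp add: hfun_def lensH_0)

lemma tt_mono: "0 < \<rho> \<Longrightarrow> tt \<rho> M j \<le> tt \<rho> M (Suc j)"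
  by (simp add: tt_def divide_right_mono)

lemma tt_nonneg: "0 < \<rho> \<Longrightarrow> 0 \<le> tt \<rho> M j"
  by (simp add: tt_def)

lemma tt_M: "0 < M \<Longrightarrow> tt \<rho> M M = 2 * \<rho>"
  by (simp add: tt_def)

lemma tt_le: "0 < \<rho> \<Longrightarrow> j \<le> M \<Longrightarrow> 0 < M \<Longrightarrow> tt \<rho> M j \<le> 2 * \<rho>"
  by (simp add: tt_def field_simps)

lemma coef_nonneg: "0 < \<rho> \<Longrightarrow> 0 \<le> hfun TYPE('d::finite) \<rho> (tt \<rho> M j) - hfun TYPE('d::finite) \<rho> (tt \<rho> M (Suc j))"
  using hfun_anti[OF tt_nonneg tt_mono] by simp

lemma Ufun_nonneg: "0 < \<rho> \<Longrightarrow> 0 \<le> Ufun TYPE('d::finite) \<rho> M r"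
  unfolding Ufun_def
  by (intro add_nonneg_nonneg sum_nonneg mult_nonneg_nonneg coef_nonneg hfun_nonneg) auto

lemma Ufun_anti: "0 < \<rho> \<Longrightarrow> r \<le> r' \<Longrightarrow> Ufun TYPE('d::finite) \<rho> M r' \<le> Ufun TYPE('d::finite) \<rho> M r"
  unfolding Ufun_def
  by (intro add_mono sum_mono mult_left_mono coef_nonneg hfun_nonneg) auto

lemma Ufun_bound:
  assumes "0 < \<rho>" "0 < M"
  shows "lensH \<rho> (y::real^'d) \<le> Ufun TYPE('d::finite) \<rho> M (norm y)"
proof (cases "norm y \<le> 2 * \<rho>")
  case True
  have "hfun TYPE('d::finite) \<rho> (norm y) \<le> Ufun TYPE('d::finite) \<rho> M (norm y)"
  proof -
    have sb: "hfun TYPE('d::finite) \<rho> (norm y) \<le> (\<Sum>j<M. (hfun TYPE('d) \<rho> (2 * \<rho> * real j / real M) - hfun TYPE('d) \<rho> (2 * \<rho> * real (Suc j) / real M)) * of_bool (norm y \<le> 2 * \<rho> * real (Suc j) / real M)) + hfun TYPE('d) \<rho> (2 * \<rho> * real M / real M)"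
      by (rule step_bounds(2)[where T="2*\<rho>"]) (use assms True hfun_anti in auto)
    have "of_bool (norm y \<le> 2 * \<rho> * real M / real M) = (1::real)" using True assms by simp
    then show ?thesis using sb unfolding Ufun_def tt_def by simp
  qed
  then show ?thesis by (simp add: hfun_norm)
next
  case False
  then show ?thesis using lensH_zero[of \<rho> y] Ufun_nonneg[OF assms(1)] by simp
qed

lemma Lfun_bound:
  assumes "0 < \<rho>" "0 < M"
  shows "Lfun TYPE('d::finite) \<rho> M (norm y) \<le> lensH \<rho> (y::real^'d)"
proof (cases "norm y \<le> 2 * \<rho>")
  case True
  have "Lfun TYPE('d::finite) \<rho> M (norm y) \<le> hfun TYPE('d::finite) \<rho> (norm y)"
  proof -
    have sb: "(\<Sum>j<M. (hfun TYPE('d::finite) \<rho> (2 * \<rho> * real j / real M) - hfun TYPE('d) \<rho> (2 * \<rho> * real (Suc j) / real M)) * of_bool (norm y \<le> 2 * \<rho> * real j / real M)) + hfun TYPE('d) \<rho> (2 * \<rho> * real M / real M) \<le> hfun TYPE('d::finite) \<rho> (norm y)"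
      by (rule step_bounds(1)[where T="2*\<rho>"]) (use assms True hfun_anti in auto)
    have "of_bool (norm y \<le> 2 * \<rho> * real M / real M) = (1::real)" using True assms by simp
    then show ?thesis using sb unfolding Lfun_def tt_def by simp
  qed
  then show ?thesis by (simp add: hfun_norm)
next
  case False
  have "Lfun TYPE('d::finite) \<rho> M (norm y) = 0"
  proof -
    have "\<not> norm y \<le> tt \<rho> M j" if "j \<le> M" for j
      using tt_le[OF assms(1) that assms(2)] False by linarith
    then show ?thesis unfolding Lfun_def by simp
  qed
  then show ?thesis by (simp add: lensH_nonneg)
qed

lemma Vball: "0 \<le> r \<Longrightarrow> measure lborel (cball (0::real^'d) r) = measure lborel (cball (0::real^'d) 1) * r ^ CARD('d)"
  by (simp add: measure_def emeasure_cball)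

lemma power_diff_le: "0 \<le> y \<Longrightarrow> y \<le> x \<Longrightarrow> x ^ n - y ^ n \<le> real n * x ^ (n - 1) * (x - y)" for x y :: real
proof (induction n)
  case 0 then show ?case by simp
next
  case (Suc n)
  have "x ^ Suc n - y ^ Suc n = x * (x ^ n - y ^ n) + y ^ n * (x - y)" by (simp add: algebra_simps)
  also have "\<dots> \<le> x * (real n * x ^ (n - 1) * (x - y)) + x ^ n * (x - y)"
    using Suc by (intro add_mono mult_left_mono mult_right_mono power_mono) auto
  also have "\<dots> = real (Suc n) * x ^ (Suc n - 1) * (x - y)"
    by (cases n) (simp_all add: algebra_simps)
  finally show ?case .
qed

lemma ofbool_ind: "of_bool (norm y \<le> a) = (indicator (cball 0 a) y :: real)"
  by (simp add: indicator_def)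

lemma U_integral:
  assumes \<rho>: "0 < \<rho>" and M: "0 < M"
  defines "V \<equiv> \<lambda>r. measure lborel (cball (0::real^'d) r)"
  defines "c \<equiv> \<lambda>j. hfun TYPE('d) \<rho> (tt \<rho> M j) - hfun TYPE('d) \<rho> (tt \<rho> M (Suc j))"
  shows "(\<Sum>j<M. c j * V (tt \<rho> M (Suc j))) + hfun TYPE('d) \<rho> (tt \<rho> M M) * V (tt \<rho> M M)
          \<le> (V \<rho>)\<^sup>2 * (1 + real CARD('d) * 2 ^ CARD('d) / real M)"
proof -
  let ?hM = "hfun TYPE('d) \<rho> (tt \<rho> M M)"
  define \<omega> where "\<omega> = measure lborel (cball (0::real^'d) 1)"
  have Vr: "V r = \<omega> * r ^ CARD('d)" if "0 \<le> r" for r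
    unfolding V_def \<omega>_def using Vball[OF that] by simp
  have c0: "0 \<le> c j" for j unfolding c_def by (rule coef_nonneg[OF \<rho>])
  have hM0: "0 \<le> ?hM" by (rule hfun_nonneg)
  have \<omega>0: "0 \<le> \<omega>" by (simp add: \<omega>_def)
  define Lg where "Lg y = (\<Sum>j<M. c j * indicator (cball 0 (tt \<rho> M j)) y) + ?hM * indicator (cball 0 (tt \<rho> M M)) (y::real^'d)" for y
  have Lg_eq: "Lg y = Lfun TYPE('d) \<rho> M (norm y)" for y
    unfolding Lg_def Lfun_def c_def by (simp add: ofbool_ind)
  have Lg_int: "integrable lborel Lg"
    unfolding Lg_def by (intro Bochner_Integration.integrable_add Bochner_Integration.integrable_sum Bochner_Integration.integrable_mult_right integrable_cball_ind)
  have Lg_integral: "(\<integral>y. Lg y \<partial>lborel) = (\<Sum>j<M. c j * V (tt \<rho> M j)) + ?hM * V (tt \<rho> M M)"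
  proof -
    have i0: "integrable lborel (\<lambda>y. c j * indicator (cball 0 (tt \<rho> M j)) (y::real^'d))" for j
      by (intro Bochner_Integration.integrable_mult_right integrable_cball_ind)
    have i1: "integrable lborel (\<lambda>y. \<Sum>j<M. c j * indicator (cball 0 (tt \<rho> M j)) (y::real^'d))"
      by (intro Bochner_Integration.integrable_sum i0)
    have i2: "integrable lborel (\<lambda>y. ?hM * indicator (cball 0 (tt \<rho> M M)) (y::real^'d))"
      by (intro Bochner_Integration.integrable_mult_right integrable_cball_ind)
    have "(\<integral>y. Lg y \<partial>lborel) = (\<integral>y. (\<Sum>j<M. c j * indicator (cball 0 (tt \<rho> M j)) (y::real^'d)) \<partial>lborel)
           + (\<integral>y. ?hM * indicator (cball 0 (tt \<rho> M M)) (y::real^'d) \<partial>lborel)"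
      unfolding Lg_def by (rule Bochner_Integration.integral_add[OF i1 i2])
    also have "(\<integral>y. (\<Sum>j<M. c j * indicator (cball 0 (tt \<rho> M j)) (y::real^'d)) \<partial>lborel)
        = (\<Sum>j<M. (\<integral>y. c j * indicator (cball 0 (tt \<rho> M j)) (y::real^'d) \<partial>lborel))"
      by (rule Bochner_Integration.integral_sum) (rule i0)
    finally show ?thesis by (simp add: integral_mult_right_zero V_def)
  qed
  have Lg_nn: "0 \<le> Lg y" for y
    unfolding Lg_def by (intro add_nonneg_nonneg sum_nonneg mult_nonneg_nonneg c0 hM0) auto
  have "ennreal (\<integral>y. Lg y \<partial>lborel) = (\<integral>\<^sup>+ y. ennreal (Lg y) \<partial>lborel)"
    by (rule nn_integral_eq_integral[symmetric]) (use Lg_int Lg_nn in auto)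
  also have "\<dots> \<le> (\<integral>\<^sup>+ y. ennreal (lensH \<rho> (y::real^'d)) \<partial>lborel)"
    by (intro nn_integral_mono ennreal_leI) (simp add: Lg_eq Lfun_bound[OF \<rho> M])
  also have "\<dots> = ennreal ((V \<rho>)\<^sup>2)"
    unfolding lensH_integral V_def by (simp add: ennreal_power)
  finally have low: "(\<Sum>j<M. c j * V (tt \<rho> M j)) + ?hM * V (tt \<rho> M M) \<le> (V \<rho>)\<^sup>2"
    unfolding Lg_integral by (rule ennreal_le_iff[THEN iffD1, rotated]) simp
  define \<delta> where "\<delta> = \<omega> * real CARD('d) * 2 ^ CARD('d) * \<rho> ^ CARD('d) / real M"
  have inc: "V (tt \<rho> M (Suc j)) - V (tt \<rho> M j) \<le> \<delta>" if j: "j < M" for j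
  proof -
    let ?a = "tt \<rho> M (Suc j)" and ?b = "tt \<rho> M j" and ?d = "CARD('d)"
    have ab: "0 \<le> ?b" "?b \<le> ?a" "?a \<le> 2 * \<rho>" using tt_nonneg[OF \<rho>] tt_mono[OF \<rho>] tt_le[OF \<rho> _ M] j by auto
    have d1: "1 \<le> ?d" using finite_UNIV_card_ge_0[where 'a='d] by simp
    have "V ?a - V ?b = \<omega> * (?a ^ ?d - ?b ^ ?d)" using Vr ab by (simp add: right_diff_distrib)
    also have "\<dots> \<le> \<omega> * (real ?d * ?a ^ (?d - 1) * (?a - ?b))"
      by (rule mult_left_mono[OF power_diff_le[OF ab(1,2)] \<omega>0])
    also have "\<dots> \<le> \<omega> * (real ?d * (2 * \<rho>) ^ (?d - 1) * (2 * \<rho> / real M))"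
    proof (intro mult_left_mono \<omega>0 mult_mono power_mono)
      show "?a - ?b \<le> 2 * \<rho> / real M" by (simp add: tt_def add_divide_distrib[symmetric] diff_divide_distrib[symmetric] algebra_simps)
    qed (use ab \<rho> in auto)
    also have "\<dots> = \<delta>"
    proof -
      have "(2 * \<rho>) ^ (?d - 1) * (2 * \<rho>) = (2 * \<rho>) ^ ?d"
        using d1 by (metis power_minus_mult less_le_trans zero_less_one)
      then show ?thesis unfolding \<delta>_def by (simp add: field_simps power_mult_distrib)
    qed
    finally show ?thesis .
  qed
  have sumc: "(\<Sum>j<M. c j) \<le> V \<rho>"
  proof -
    have "(\<Sum>j<M. c j) = hfun TYPE('d) \<rho> (tt \<rho> M 0) - ?hM"
      unfolding c_def by (rule sum_lessThan_telescope')
    also have "\<dots> \<le> hfun TYPE('d) \<rho> 0" using hM0 by (simp add: tt_def)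
    finally show ?thesis by (simp add: hfun_0 V_def)
  qed
  have "(\<Sum>j<M. c j * V (tt \<rho> M (Suc j))) - (\<Sum>j<M. c j * V (tt \<rho> M j)) = (\<Sum>j<M. c j * (V (tt \<rho> M (Suc j)) - V (tt \<rho> M j)))"
    by (simp add: sum_subtractf right_diff_distrib)
  also have "\<dots> \<le> (\<Sum>j<M. c j * \<delta>)"
    by (intro sum_mono mult_left_mono inc c0) auto
  also have "\<dots> \<le> V \<rho> * \<delta>"
  proof -
    have "0 \<le> \<delta>" unfolding \<delta>_def using \<rho> \<omega>0 by simp
    then show ?thesis using sumc by (simp add: sum_distrib_right[symmetric] mult_right_mono)
  qed
  also have "\<dots> = (V \<rho>)\<^sup>2 * (real CARD('d) * 2 ^ CARD('d) / real M)"
    using Vr[of \<rho>] \<rho> by (simp add: \<delta>_def power2_eq_square field_simps)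
  finally show ?thesis using low by (simp add: algebra_simps)
qed

lemma pair_count:
  fixes P :: "nat \<Rightarrow> nat \<Rightarrow> bool"
  shows "(\<Sum>k\<in>{1..N}. \<Sum>k'\<in>{1..N} - {k}. (of_bool (P k k') :: real))
       = real (card {(m, n). m \<in> {1..N} \<and> n \<in> {1..N} \<and> m \<noteq> n \<and> P m n})"
proof -
  have eq: "{(m, n). m \<in> {1..N} \<and> n \<in> {1..N} \<and> m \<noteq> n \<and> P m n} = Sigma {1..N} (\<lambda>m. ({1..N} - {m}) \<inter> {n. P m n})"
    by auto
  have "card {(m, n). m \<in> {1..N} \<and> n \<in> {1..N} \<and> m \<noteq> n \<and> P m n} = (\<Sum>m\<in>{1..N}. card (({1..N} - {m}) \<inter> {n. P m n}))"
    unfolding eq by (rule card_SigmaI) auto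
  then show ?thesis by (simp add: sum_of_bool_eq)
qed

lemma sum_swap3:
  fixes a :: "nat \<Rightarrow> real" and g :: "nat \<Rightarrow> nat \<Rightarrow> nat \<Rightarrow> real"
  shows "(\<Sum>k\<in>A. \<Sum>k'\<in>B k. \<Sum>j<M. a j * g j k k') = (\<Sum>j<M. a j * (\<Sum>k\<in>A. \<Sum>k'\<in>B k. g j k k'))"
proof -
  have "(\<Sum>k\<in>A. \<Sum>k'\<in>B k. \<Sum>j<M. a j * g j k k') = (\<Sum>k\<in>A. \<Sum>j<M. \<Sum>k'\<in>B k. a j * g j k k')"
    by (intro sum.cong refl sum.swap)
  also have "\<dots> = (\<Sum>j<M. \<Sum>k\<in>A. \<Sum>k'\<in>B k. a j * g j k k')"
    by (rule sum.swap)
  also have "\<dots> = (\<Sum>j<M. a j * (\<Sum>k\<in>A. \<Sum>k'\<in>B k. g j k k'))"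
    by (simp add: sum_distrib_left)
  finally show ?thesis .
qed

lemma energy_bound_N:
  fixes x :: "nat \<Rightarrow> real^'d" and t :: real and M N :: nat
  assumes t: "0 < t" and M: "0 < M" and N: "1 \<le> N"
    and small: "(t/6) / real N powr (1 / real CARD('d)) < 1/4"
  defines "\<omega> \<equiv> measure lborel (cball (0::real^'d) 1)"
  defines "\<tau> \<equiv> t/6"
  defines "err \<equiv> (\<Sum>j<M. \<bar>real (close_pairs x (2*\<tau>*real (Suc j)/real M) N) / real N - \<omega> * (2*\<tau>*real (Suc j)/real M) ^ CARD('d)\<bar>)
                  + \<bar>real (close_pairs x (2*\<tau>) N) / real N - \<omega> * (2*\<tau>) ^ CARD('d)\<bar>"
  shows "exp_sum_energy x t N \<le> 4/(\<omega> * \<tau>^CARD('d)) + 4 * real CARD('d) * 2^CARD('d) / real M + 4/(\<omega> * \<tau>^CARD('d)) * err"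
proof -
  define d where "d = CARD('d)"
  define n1 where "n1 = real N powr (1 / real d)"
  define \<rho> where "\<rho> = \<tau> / n1"
  define V where "V = measure lborel (cball (0::real^'d) \<rho>)"
  define K where "K = real d * 2 ^ d"
  have d1: "1 \<le> d" unfolding d_def using finite_UNIV_card_ge_0[where 'a='d] by simp
  have Npos: "0 < real N" using N by simp
  have n1pos: "0 < n1" unfolding n1_def using Npos by simp
  have n1d: "n1 ^ d = real N"
  proof -
    have "n1 ^ d = real N powr (real d * (1 / real d))"
      unfolding n1_def using Npos by (subst powr_power) auto
    also have "\<dots> = real N" using d1 Npos by simp
    finally show ?thesis .
  qed
  have \<tau>pos: "0 < \<tau>" using t by (simp add: \<tau>_def)
  have \<rho>pos: "0 < \<rho>" unfolding \<rho>_def using \<tau>pos n1pos by simp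
  have \<rho>small: "\<rho> < 1/4" using small by (simp add: \<rho>_def \<tau>_def n1_def d_def)
  have \<omega>pos: "0 < \<omega>" unfolding \<omega>_def using content_cball_pos[of 1 "0::real^'d"] by simp
  have Vr: "measure lborel (cball (0::real^'d) r) = \<omega> * r ^ d" if "0 \<le> r" for r
    unfolding \<omega>_def d_def using Vball[OF that] by simp
  have V: "V = \<omega> * \<rho> ^ d" unfolding V_def using Vr \<rho>pos by simp
  have NV: "real N * V = \<omega> * \<tau> ^ d"
    unfolding V \<rho>_def using n1d n1pos Npos by (simp add: power_divide field_simps)
  have Vpos: "0 < V" unfolding V using \<omega>pos \<rho>pos by simp
  define \<Lambda> where "\<Lambda> = {l::real^'d. l \<in> int_lattice \<and> 1 \<le> norm l \<and> norm l \<le> n1 / t}"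
  have \<Lambda>fin: "finite \<Lambda>"
  proof (rule finite_subset[OF _ lat_box_finite[where R="n1/t"]])
    show "\<Lambda> \<subseteq> {n::real^'d. n \<in> int_lattice \<and> (\<forall>i. \<bar>n $ i\<bar> \<le> n1 / t)}"
      unfolding \<Lambda>_def using component_le_norm_cart order_trans by blast
  qed
  have \<Lambda>l: "\<Lambda> \<subseteq> int_lattice" "0 \<notin> \<Lambda>" by (auto simp: \<Lambda>_def)
  have \<Lambda>6: "norm l * \<rho> \<le> 1/6" if "l \<in> \<Lambda>" for l
  proof -
    have "norm l * \<rho> \<le> n1 / t * \<rho>" using that \<rho>pos by (intro mult_right_mono) (auto simp: \<Lambda>_def)
    also have "\<dots> = 1/6" unfolding \<rho>_def \<tau>_def using n1pos t by simp
    finally show ?thesis .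
  qed
  define SS where "SS = (\<Sum>l\<in>\<Lambda>. (norm (\<Sum>k=1..N. exp (complex_of_real (2 * pi * (l \<bullet> x k)) * \<i>)))\<^sup>2)"
  define PS where "PS = (\<Sum>k\<in>{1..N}. \<Sum>k'\<in>{1..N} - {k}. Ufun TYPE('d) \<rho> M (torus_dist (x k) (x k')))"
  have main: "V\<^sup>2 * (real N)\<^sup>2 + (V/2)\<^sup>2 * SS \<le> real N * V + PS"
    unfolding SS_def PS_def V_def
  proof (rule main_ineq[OF \<rho>pos \<rho>small])
    show "lensH \<rho> y \<le> Ufun TYPE('d) \<rho> M (norm y)" for y :: "real^'d" by (rule Ufun_bound[OF \<rho>pos M])
    show "Ufun TYPE('d) \<rho> M r' \<le> Ufun TYPE('d) \<rho> M r" if "0 \<le> r" "r \<le> r'" for r r'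
      by (rule Ufun_anti[OF \<rho>pos that(2)])
    show "0 \<le> Ufun TYPE('d) \<rho> M r" for r by (rule Ufun_nonneg[OF \<rho>pos])
  qed (use \<Lambda>fin \<Lambda>l \<Lambda>6 in auto)
  define c where "c j = hfun TYPE('d) \<rho> (tt \<rho> M j) - hfun TYPE('d) \<rho> (tt \<rho> M (Suc j))" for j
  define hM where "hM = hfun TYPE('d) \<rho> (tt \<rho> M M)"
  define s where "s j = 2 * \<tau> * real (Suc j) / real M" for j
  define cp where "cp r = real (close_pairs x r N)" for r
  have cnt: "(\<Sum>k\<in>{1..N}. \<Sum>k'\<in>{1..N} - {k}. of_bool (torus_dist (x k) (x k') \<le> r / n1)) = cp r" for r
    unfolding cp_def close_pairs_def n1_def d_def by (rule pair_count)
  have ttS: "tt \<rho> M (Suc j) = s j / n1" for j unfolding tt_def s_def \<rho>_def by (simp add: field_simps)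
  have ttM: "tt \<rho> M M = (2 * \<tau>) / n1" using M unfolding tt_def \<rho>_def by simp
  have PS_eq: "PS = (\<Sum>j<M. c j * cp (s j)) + hM * cp (2 * \<tau>)"
  proof -
    have "PS = (\<Sum>k\<in>{1..N}. \<Sum>k'\<in>{1..N} - {k}. \<Sum>j<M. c j * of_bool (torus_dist (x k) (x k') \<le> s j / n1))
             + (\<Sum>k\<in>{1..N}. \<Sum>k'\<in>{1..N} - {k}. hM * of_bool (torus_dist (x k) (x k') \<le> 2 * \<tau> / n1))"
      unfolding PS_def Ufun_def c_def hM_def ttS ttM by (simp add: sum.distrib)
    also have "\<dots> = (\<Sum>j<M. c j * (\<Sum>k\<in>{1..N}. \<Sum>k'\<in>{1..N} - {k}. of_bool (torus_dist (x k) (x k') \<le> s j / n1)))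
             + hM * (\<Sum>k\<in>{1..N}. \<Sum>k'\<in>{1..N} - {k}. of_bool (torus_dist (x k) (x k') \<le> 2 * \<tau> / n1))"
      by (subst sum_swap3) (simp only: sum_distrib_left)
    finally show ?thesis by (simp only: cnt)
  qed
  have Vtt: "measure lborel (cball (0::real^'d) (r / n1)) = \<omega> * r ^ d / real N" if "0 \<le> r" for r
    using Vr[of "r / n1"] that n1pos n1d by (simp add: power_divide)
  have Uint: "(\<Sum>j<M. c j * (\<omega> * s j ^ d / real N)) + hM * (\<omega> * (2*\<tau>) ^ d / real N) \<le> V\<^sup>2 * (1 + K / real M)"
  proof -
    have UI: "(\<Sum>j<M. c j * measure lborel (cball (0::real^'d) (tt \<rho> M (Suc j)))) + hM * measure lborel (cball (0::real^'d) (tt \<rho> M M)) \<le> V\<^sup>2 * (1 + K / real M)"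
      using U_integral[where 'd='d, OF \<rho>pos M] unfolding c_def hM_def V_def K_def d_def by simp
    have s0: "0 \<le> s j" for j unfolding s_def using \<tau>pos by simp
    have "measure lborel (cball (0::real^'d) (tt \<rho> M (Suc j))) = \<omega> * s j ^ d / real N" for j
      unfolding ttS by (rule Vtt[OF s0])
    moreover have "measure lborel (cball (0::real^'d) (tt \<rho> M M)) = \<omega> * (2*\<tau>) ^ d / real N"
      unfolding ttM by (rule Vtt) (use \<tau>pos in simp)
    ultimately show ?thesis using UI by simp
  qed
  have c0: "0 \<le> c j" for j unfolding c_def by (rule coef_nonneg[OF \<rho>pos])
  have cV: "c j \<le> V" for j
  proof -
    have "c j \<le> hfun TYPE('d) \<rho> (tt \<rho> M j)" unfolding c_def using hfun_nonneg by simp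
    also have "\<dots> \<le> hfun TYPE('d) \<rho> 0" by (rule hfun_anti[OF order_refl tt_nonneg[OF \<rho>pos]])
    finally show ?thesis by (simp add: hfun_0 V_def)
  qed
  have hM0: "0 \<le> hM" unfolding hM_def by (rule hfun_nonneg)
  have hMV: "hM \<le> V"
  proof -
    have "hfun TYPE('d) \<rho> (tt \<rho> M M) \<le> hfun TYPE('d) \<rho> 0"
      by (rule hfun_anti[OF order_refl tt_nonneg[OF \<rho>pos]])
    then show ?thesis unfolding hM_def V_def by (simp add: hfun_0)
  qed
  define e where "e r = \<bar>cp r / real N - \<omega> * r ^ d\<bar>" for r
  have cpb: "cp r \<le> real N * (\<omega> * r ^ d) + real N * e r" for r
  proof -
    have "cp r = real N * (cp r / real N)" using Npos by simp
    also have "\<dots> \<le> real N * (\<omega> * r ^ d + e r)" unfolding e_def using Npos by (intro mult_left_mono) auto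
    finally show ?thesis by (simp add: algebra_simps)
  qed
  have PSb: "PS \<le> (real N)\<^sup>2 * V\<^sup>2 * (1 + K / real M) + real N * V * ((\<Sum>j<M. e (s j)) + e (2 * \<tau>))"
  proof -
    have "PS \<le> (\<Sum>j<M. c j * (real N * (\<omega> * s j ^ d) + real N * e (s j))) + hM * (real N * (\<omega> * (2*\<tau>) ^ d) + real N * e (2*\<tau>))"
      unfolding PS_eq by (intro add_mono sum_mono mult_left_mono cpb c0 hM0)
    also have "\<dots> = (real N)\<^sup>2 * ((\<Sum>j<M. c j * (\<omega> * s j ^ d / real N)) + hM * (\<omega> * (2*\<tau>) ^ d / real N))
                  + real N * ((\<Sum>j<M. c j * e (s j)) + hM * e (2*\<tau>))"
      using Npos by (simp add: sum.distrib sum_distrib_left power2_eq_square field_simps)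
    also have "\<dots> \<le> (real N)\<^sup>2 * (V\<^sup>2 * (1 + K / real M)) + real N * ((\<Sum>j<M. V * e (s j)) + V * e (2*\<tau>))"
    proof (intro add_mono mult_left_mono Uint sum_mono mult_right_mono cV hMV)
    qed (auto simp: e_def)
    also have "\<dots> = (real N)\<^sup>2 * V\<^sup>2 * (1 + K / real M) + real N * V * ((\<Sum>j<M. e (s j)) + e (2 * \<tau>))"
      by (simp add: sum_distrib_left algebra_simps)
    finally show ?thesis .
  qed
  have err_eq: "err = (\<Sum>j<M. e (s j)) + e (2 * \<tau>)"
    unfolding err_def e_def s_def cp_def d_def ..
  have key: "(V/2)\<^sup>2 * SS \<le> real N * V + (real N)\<^sup>2 * V\<^sup>2 * (K / real M) + real N * V * err"
    using main PSb unfolding err_eq by (simp add: algebra_simps)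
  have E: "exp_sum_energy x t N = SS / (real N)\<^sup>2"
    unfolding exp_sum_energy_def SS_def \<Lambda>_def n1_def d_def by (simp add: sum_divide_distrib)
  have "SS / (real N)\<^sup>2 = (4 / (V\<^sup>2 * (real N)\<^sup>2)) * ((V/2)\<^sup>2 * SS)"
    using Vpos Npos by (simp add: field_simps power2_eq_square)
  also have "\<dots> \<le> (4 / (V\<^sup>2 * (real N)\<^sup>2)) * (real N * V + (real N)\<^sup>2 * V\<^sup>2 * (K / real M) + real N * V * err)"
    by (rule mult_left_mono[OF key]) simp
  also have "\<dots> = 4 / (real N * V) + 4 * K / real M + 4 / (real N * V) * err"
    using Vpos Npos by (simp add: field_simps power2_eq_square)
  finally show ?thesis unfolding E NV K_def d_def by simp
qed

lemma ubv_eq: "unit_ball_vol TYPE('d::finite) = measure lborel (cball (0::real^'d) 1)"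
  unfolding unit_ball_vol_def using content_cball_conv_ball[of "0::real^'d" 1] by simp

lemma eventually_rho_small:
  fixes \<tau> :: real and d :: nat
  assumes "0 < \<tau>" "1 \<le> d"
  shows "eventually (\<lambda>N. 1 \<le> N \<and> \<tau> / real N powr (1 / real d) < 1/4) sequentially"
proof -
  define N0 where "N0 = nat \<lceil>(4 * \<tau>) ^ d\<rceil> + 1"
  show ?thesis unfolding eventually_sequentially
  proof (intro exI allI impI)
    fix N assume N: "N0 \<le> N"
    have N1: "1 \<le> N" using N by (simp add: N0_def)
    have "(4 * \<tau>) ^ d < real N"
    proof -
      have "(4 * \<tau>) ^ d \<le> real (nat \<lceil>(4 * \<tau>) ^ d\<rceil>)" by linarith
      also have "\<dots> < real N0" by (simp add: N0_def)
      also have "\<dots> \<le> real N" using N by simp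
      finally show ?thesis .
    qed
    then have "((4 * \<tau>) ^ d) powr (1 / real d) < real N powr (1 / real d)"
      by (intro powr_less_mono2) (use assms in auto)
    moreover have "((4 * \<tau>) ^ d) powr (1 / real d) = 4 * \<tau>"
    proof -
      have "((4 * \<tau>) ^ d) powr (1 / real d) = ((4 * \<tau>) powr real d) powr (1 / real d)"
        using assms by (simp add: powr_realpow)
      also have "\<dots> = 4 * \<tau>" using assms by (simp add: powr_powr)
      finally show ?thesis .
    qed
    ultimately have "4 * \<tau> < real N powr (1 / real d)" by simp
    then have "\<tau> / real N powr (1 / real d) < 1/4"
      using assms by (simp add: divide_less_eq)
    then show "1 \<le> N \<and> \<tau> / real N powr (1 / real d) < 1/4" using N1 by simp
  qed
qed

theorem theorem3:
  "\<exists>c>0. \<forall>t>0. \<forall>x :: nat \<Rightarrow> real^'d.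
     (\<forall>s. 0 < s \<and> s < t \<longrightarrow>
        ((\<lambda>N. real (close_pairs x s N) / real N) \<longlongrightarrow>
            unit_ball_vol TYPE('d) * s ^ CARD('d)) sequentially)
     \<longrightarrow> limsup (\<lambda>N. ereal (exp_sum_energy x t N)) \<le> ereal (c / t ^ CARD('d))"
proof -
  define \<omega> where "\<omega> = measure lborel (cball (0::real^'d) 1)"
  define d where "d = CARD('d)"
  have \<omega>pos: "0 < \<omega>" unfolding \<omega>_def using content_cball_pos[of 1 "0::real^'d"] by simp
  have d1: "1 \<le> d" unfolding d_def using finite_UNIV_card_ge_0[where 'a='d] by simp
  define c where "c = 4 * 6 ^ d / \<omega>"
  have cpos: "0 < c" unfolding c_def using \<omega>pos by simp
  show ?thesis
  proof (intro exI[of _ c] conjI cpos allI impI)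
    fix t :: real and x :: "nat \<Rightarrow> real^'d"
    assume t: "0 < t"
    assume hyp: "\<forall>s. 0 < s \<and> s < t \<longrightarrow>
        ((\<lambda>N. real (close_pairs x s N) / real N) \<longlongrightarrow> unit_ball_vol TYPE('d) * s ^ CARD('d)) sequentially"
    define \<tau> where "\<tau> = t / 6"
    have \<tau>pos: "0 < \<tau>" using t by (simp add: \<tau>_def)
    have B: "c / t ^ CARD('d) = 4 / (\<omega> * \<tau> ^ CARD('d))"
      unfolding c_def \<tau>_def d_def using t \<omega>pos by (simp add: power_divide field_simps)
    have conv: "((\<lambda>N. \<bar>real (close_pairs x s N) / real N - \<omega> * s ^ CARD('d)\<bar>) \<longlongrightarrow> 0) sequentially"
      if "0 < s" "s < t" for s
    proof -
      have "((\<lambda>N. real (close_pairs x s N) / real N) \<longlongrightarrow> \<omega> * s ^ CARD('d)) sequentially"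
        using hyp that by (simp add: ubv_eq \<omega>_def)
      then have "((\<lambda>N. real (close_pairs x s N) / real N - \<omega> * s ^ CARD('d)) \<longlongrightarrow> 0) sequentially"
        by (rule LIM_zero)
      then show ?thesis by (rule tendsto_rabs_zero)
    qed
    show "limsup (\<lambda>N. ereal (exp_sum_energy x t N)) \<le> ereal (c / t ^ CARD('d))"
    proof (rule ereal_le_epsilon2)
      fix \<epsilon> :: real assume \<epsilon>: "0 < \<epsilon>"
      define M where "M = nat \<lceil>8 * real d * 2 ^ d / \<epsilon>\<rceil> + 1"
      have M0: "0 < M" by (simp add: M_def)
      have Mb: "4 * real d * 2 ^ d / real M \<le> \<epsilon> / 2"
      proof -
        have "8 * real d * 2 ^ d / \<epsilon> \<le> real M" unfolding M_def by linarith
        then have "8 * real d * 2 ^ d \<le> real M * \<epsilon>" using \<epsilon> by (simp add: divide_le_eq)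
        then show ?thesis using M0 by (simp add: field_simps; linarith)
      qed
      define err where "err N = (\<Sum>j<M. \<bar>real (close_pairs x (2*\<tau>*real (Suc j)/real M) N) / real N - \<omega> * (2*\<tau>*real (Suc j)/real M) ^ CARD('d)\<bar>)
                  + \<bar>real (close_pairs x (2*\<tau>) N) / real N - \<omega> * (2*\<tau>) ^ CARD('d)\<bar>" for N
      have err0: "(err \<longlongrightarrow> 0) sequentially"
      proof -
        have "(err \<longlongrightarrow> (\<Sum>j<M. 0) + 0) sequentially"
          unfolding err_def
        proof (intro tendsto_add tendsto_sum)
          fix j assume j: "j \<in> {..<M}"
          show "((\<lambda>N. \<bar>real (close_pairs x (2*\<tau>*real (Suc j)/real M) N) / real N - \<omega> * (2*\<tau>*real (Suc j)/real M) ^ CARD('d)\<bar>) \<longlongrightarrow> 0) sequentially"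
          proof (rule conv)
            show "0 < 2 * \<tau> * real (Suc j) / real M" using \<tau>pos M0 by simp
            have "real (Suc j) \<le> real M" using j by simp
            then have "2 * \<tau> * real (Suc j) / real M \<le> 2 * \<tau>" using \<tau>pos M0 by (simp add: divide_le_eq)
            then show "2 * \<tau> * real (Suc j) / real M < t" using t by (simp add: \<tau>_def)
          qed
        next
          show "((\<lambda>N. \<bar>real (close_pairs x (2*\<tau>) N) / real N - \<omega> * (2*\<tau>) ^ CARD('d)\<bar>) \<longlongrightarrow> 0) sequentially"
            by (rule conv) (use t in \<open>auto simp: \<tau>_def\<close>)
        qed
        then show ?thesis by simp
      qed
      have ev_err: "eventually (\<lambda>N. err N < \<epsilon> * (\<omega> * \<tau> ^ CARD('d)) / 8) sequentially"
      proof -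
        have "0 < \<epsilon> * (\<omega> * \<tau> ^ CARD('d)) / 8" using \<epsilon> \<omega>pos \<tau>pos by simp
        then show ?thesis by (rule order_tendstoD(2)[OF err0])
      qed
      have "eventually (\<lambda>N. exp_sum_energy x t N \<le> c / t ^ CARD('d) + \<epsilon>) sequentially"
        using ev_err eventually_rho_small[OF \<tau>pos d1]
      proof eventually_elim
        case (elim N)
        then have N1: "1 \<le> N" and sm: "\<tau> / real N powr (1 / real d) < 1/4"
          and eN: "err N < \<epsilon> * (\<omega> * \<tau> ^ CARD('d)) / 8" by auto
        have W: "0 < \<omega> * \<tau> ^ CARD('d)" using \<omega>pos \<tau>pos by simp
        have "exp_sum_energy x t N \<le> 4/(\<omega> * \<tau>^CARD('d)) + 4 * real CARD('d) * 2^CARD('d) / real M + 4/(\<omega> * \<tau>^CARD('d)) * err N"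
          unfolding err_def \<omega>_def \<tau>_def
          by (rule energy_bound_N[OF t M0 N1]) (use sm in \<open>simp add: \<tau>_def d_def\<close>)
        also have "\<dots> \<le> c / t ^ CARD('d) + \<epsilon> / 2 + \<epsilon> / 2"
        proof -
          have "4/(\<omega> * \<tau>^CARD('d)) * err N \<le> 4/(\<omega> * \<tau>^CARD('d)) * (\<epsilon> * (\<omega> * \<tau> ^ CARD('d)) / 8)"
            using eN W by (intro mult_left_mono) auto
          also have "\<dots> = \<epsilon> / 2" using W \<tau>pos \<omega>pos by (simp add: field_simps)
          finally show ?thesis using Mb B by (simp add: d_def)
        qed
        finally show ?case by simp
      qed
      then have "Limsup sequentially (\<lambda>N. ereal (exp_sum_energy x t N)) \<le> ereal (c / t ^ CARD('d) + \<epsilon>)"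
        by (intro Limsup_bounded) (auto elim: eventually_mono)
      then show "limsup (\<lambda>N. ereal (exp_sum_energy x t N)) \<le> ereal (c / t ^ CARD('d)) + ereal \<epsilon>"
        by simp
    qed
  qed
qed

end
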